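(* Let $L=L_A+L_B+L_C$ and consider the kicked field Ising chain of $L$ spins-$\tfrac12$ with periodic boundary conditions at the self-dual point $J=\pi/4$, $b=-\pi/4$, with arbitrary real longitudinal fields $h_1,\dots,h_L$. Let the initial state be a transverse-class product state $|\psi_{\pi/2,\phi}\rangle$, and let $\rho_{AB}(t)=\mathrm{tr}_C\big(U^t|\psi_{\pi/2,\phi}\rangle\langle\psi_{\pi/2,\phi}|U^{-t}\big)$. Then for every integer $t\ge 1$ with $2t\le \min(L_A,L_B,L_C)$ (in particular for $L_A,L_B,L_C$ sufficiently large) and every integer $n\ge 1$, $$\ln \mathrm{tr}\Big(\big(\rho_{AB}^{T_B}(t)\big)^{2n}\Big)=(4-6n)\,t\ln 2 .$$
   Context: Pauli matrices $\sigma^x_i,\sigma^z_i$ act on site $i$, with $\sigma_{L+1}\equiv\sigma_1$. The Hamiltonians are $H_I=J\sum_{i=1}^L\sigma^z_i\sigma^z_{i+1}+\sum_{i=1}^L h_i\sigma^z_i$ and $H_K=b\sum_{i=1}^L\sigma^x_i$; the Floquet (one-period) operator is $U=e^{-iH_K}e^{-iH_I}$. The product states are $|\psi_{\theta,\phi}\rangle=\bigotimes_{k=1}^L\big(\cos(\theta_k/2)|\uparrow\rangle+e^{i\phi_k}\sin(\theta_k/2)|\downarrow\rangle\big)$; the transverse class consists of the states with $\theta_k=\pi/2$ for all $k$ and a phase $\phi_k=\phi\in[0,2\pi]$. The chain is partitioned into contiguous blocks $A=\{1,\dots,L_A\}$, $B=\{L_A+1,\dots,L_A+L_B\}$, $C=\{L_A+L_B+1,\dots,L\}$.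 $\mathrm{tr}_C$ is the partial trace over $C$ and $(\cdot)^{T_B}$ denotes the partial transpose with respect to $B$ in the computational ($\sigma^z$) basis. *)

theory Defs
  imports "HOL-Analysis.Analysis"
begin

text \<open>Computational basis configurations of n spins: boolean lists of length n.
  Site k (0-based, paper's site k+1) is spin up iff s!k = True.
  Operators on n spins are functions bool list => bool list => complex (matrix elements).\<close>

definition configs :: "nat \<Rightarrow> bool list set" where
  "configs n = {s. length s = n}"

definition spinz :: "bool list \<Rightarrow> nat \<Rightarrow> real" where
  "spinz s i = (if s ! i then 1 else -1)"

definition ising_energy :: "nat \<Rightarrow> real \<Rightarrow> (nat \<Rightarrow> real) \<Rightarrow> bool list \<Rightarrow> real" where
  "ising_energy L J h s =
     J * (\<Sum>i<L. spinz s i * spinz s ((i + 1) mod L)) + (\<Sum>i<L. h i * spinz s i)"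

text \<open>Matrix element of exp(-i H_K) = tensor product of (cos b I - i sin b sigma^x).\<close>
definition kick_elem :: "nat \<Rightarrow> real \<Rightarrow> bool list \<Rightarrow> bool list \<Rightarrow> complex" where
  "kick_elem L b s' s =
     (\<Prod>i<L. if s' ! i = s ! i then complex_of_real (cos b) else - \<i> * complex_of_real (sin b))"

definition floquet :: "nat \<Rightarrow> real \<Rightarrow> real \<Rightarrow> (nat \<Rightarrow> real) \<Rightarrow> (bool list \<Rightarrow> complex) \<Rightarrow> (bool list \<Rightarrow> complex)" where
  "floquet L J b h \<psi> = (\<lambda>s'. \<Sum>s\<in>configs L.
      kick_elem L b s' s * exp (- \<i> * complex_of_real (ising_energy L J h s)) * \<psi> s)"

definition prod_state :: "nat \<Rightarrow> (nat \<Rightarrow> real) \<Rightarrow> (nat \<Rightarrow> real) \<Rightarrow> bool list \<Rightarrow> complex" where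
  "prod_state L \<theta> \<phi> s = (\<Prod>k<L. if s ! k then complex_of_real (cos (\<theta> k / 2))
                                   else exp (\<i> * complex_of_real (\<phi> k)) * complex_of_real (sin (\<theta> k / 2)))"

text \<open>Pure-state density matrix |v><v| (so U^t |psi><psi| U^{-t} with U^{-t} = (U^t)^dagger).\<close>
definition proj :: "(bool list \<Rightarrow> complex) \<Rightarrow> bool list \<Rightarrow> bool list \<Rightarrow> complex" where
  "proj v x y = v x * cnj (v y)"

definition ptrace_last :: "nat \<Rightarrow> (bool list \<Rightarrow> bool list \<Rightarrow> complex) \<Rightarrow> bool list \<Rightarrow> bool list \<Rightarrow> complex" where
  "ptrace_last m \<rho> x y = (\<Sum>c\<in>configs m. \<rho> (x @ c) (y @ c))"

definition ptranspose_after :: "nat \<Rightarrow> (bool list \<Rightarrow> bool list \<Rightarrow> complex) \<Rightarrow> bool list \<Rightarrow> bool list \<Rightarrow> complex" where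
  "ptranspose_after a \<rho> x y = \<rho> (take a x @ drop a y) (take a y @ drop a x)"

definition mat_mul :: "nat \<Rightarrow> (bool list \<Rightarrow> bool list \<Rightarrow> complex) \<Rightarrow> (bool list \<Rightarrow> bool list \<Rightarrow> complex) \<Rightarrow> bool list \<Rightarrow> bool list \<Rightarrow> complex" where
  "mat_mul n M N x y = (\<Sum>z\<in>configs n. M x z * N z y)"

fun mat_pow :: "nat \<Rightarrow> (bool list \<Rightarrow> bool list \<Rightarrow> complex) \<Rightarrow> nat \<Rightarrow> bool list \<Rightarrow> bool list \<Rightarrow> complex" where
  "mat_pow n M 0 = (\<lambda>x y. if x = y then 1 else 0)"
| "mat_pow n M (Suc k) = mat_mul n (mat_pow n M k) M"

definition mtrace :: "nat \<Rightarrow> (bool list \<Rightarrow> bool list \<Rightarrow> complex) \<Rightarrow> complex" where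
  "mtrace n M = (\<Sum>x\<in>configs n. M x x)"

definition rhoAB :: "nat \<Rightarrow> nat \<Rightarrow> nat \<Rightarrow> real \<Rightarrow> real \<Rightarrow> (nat \<Rightarrow> real) \<Rightarrow> real \<Rightarrow> nat \<Rightarrow> bool list \<Rightarrow> bool list \<Rightarrow> complex" where
  "rhoAB LA LB LC J b h \<phi> t =
     ptrace_last LC (proj ((floquet (LA + LB + LC) J b h ^^ t)
                             (prod_state (LA + LB + LC) (\<lambda>_. pi / 2) (\<lambda>_. \<phi>))))"

end

theory Submission
  imports Defs
begin

definition sp :: "bool \<Rightarrow> real" where "sp a = (if a then 1 else -1)"

definition kf :: "bool \<Rightarrow> bool \<Rightarrow> complex" where
  "kf a b = (if a = b then complex_of_real (cos (- pi / 4)) else - \<i> * complex_of_real (sin (- pi / 4)))"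

definition fexp :: "real \<Rightarrow> bool \<Rightarrow> complex" where
  "fexp hh a = exp (- \<i> * complex_of_real (hh * sp a))"

definition isg :: "bool \<Rightarrow> bool \<Rightarrow> complex" where
  "isg a b = exp (- \<i> * complex_of_real (pi / 4 * (sp a * sp b)))"

definition ini :: "real \<Rightarrow> bool \<Rightarrow> complex" where
  "ini \<phi> a = (if a then complex_of_real (cos (pi / 2 / 2))
              else exp (\<i> * complex_of_real \<phi>) * complex_of_real (sin (pi / 2 / 2)))"

fun colw :: "real \<Rightarrow> real \<Rightarrow> bool list \<Rightarrow> complex" where
  "colw \<phi> hh [] = 0"
| "colw \<phi> hh [x] = ini \<phi> x"
| "colw \<phi> hh (x # y # r) = kf x y * fexp hh y * colw \<phi> hh (y # r)"

fun bd :: "bool list \<Rightarrow> bool list \<Rightarrow> complex" where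
  "bd [] [] = 1"
| "bd (a # c) (a' # d) = isg a a' * bd c d"
| "bd _ _ = 0"

definition ringamp :: "real \<Rightarrow> (nat \<Rightarrow> real) \<Rightarrow> nat \<Rightarrow> nat \<Rightarrow> bool list \<Rightarrow> complex" where
  "ringamp \<phi> h L t s = (\<Sum>cols\<in>PiE {..<L} (\<lambda>_. configs t).
      \<Prod>i<L. colw \<phi> (h i) (s ! i # cols i) * bd (cols i) (cols ((i + 1) mod L)))"

lemma kick_prod: "kick_elem L (- pi / 4) s' s = (\<Prod>i<L. kf (s' ! i) (s ! i))"
  unfolding kick_elem_def kf_def by simp

lemma exp_energy:
  "exp (- \<i> * complex_of_real (ising_energy L (pi / 4) h s)) =
     (\<Prod>i<L. isg (s ! i) (s ! ((i + 1) mod L))) * (\<Prod>i<L. fexp (h i) (s ! i))"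
proof -
  have "- \<i> * complex_of_real (ising_energy L (pi / 4) h s) =
     (\<Sum>i<L. - \<i> * complex_of_real (pi / 4 * (sp (s ! i) * sp (s ! ((i + 1) mod L)))))
   + (\<Sum>i<L. - \<i> * complex_of_real (h i * sp (s ! i)))"
    unfolding ising_energy_def spinz_def sp_def
    by (simp add: sum_distrib_left distrib_left mult_ac)
  then show ?thesis
    by (simp add: exp_add exp_sum isg_def fexp_def)
qed

lemma configs_Suc_iff: "x \<in> configs (Suc n) \<longleftrightarrow> (\<exists>a r. x = a # r \<and> r \<in> configs n)"
  unfolding configs_def by (cases x) auto

lemma floquet_ring:
  assumes s: "s \<in> configs L" and L: "L \<ge> 1"
  shows "floquet L (pi / 4) (- pi / 4) h (ringamp \<phi> h L t) s = ringamp \<phi> h L (Suc t) s"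
proof -
  define G where "G = (\<lambda>cols. \<Prod>i<L. colw \<phi> (h i) (s ! i # cols i) * bd (cols i) (cols ((i + 1) mod L)))"
  have modL: "(i + 1) mod L < L" for i using L by auto
  have "floquet L (pi / 4) (- pi / 4) h (ringamp \<phi> h L t) s =
     (\<Sum>s'\<in>configs L. \<Sum>cols\<in>PiE {..<L} (\<lambda>_. configs t).
        (\<Prod>i<L. kf (s ! i) (s' ! i)) * ((\<Prod>i<L. isg (s' ! i) (s' ! ((i + 1) mod L))) * (\<Prod>i<L. fexp (h i) (s' ! i))) *
        (\<Prod>i<L. colw \<phi> (h i) (s' ! i # cols i) * bd (cols i) (cols ((i + 1) mod L))))"
    unfolding floquet_def kick_prod exp_energy ringamp_def by (simp add: sum_distrib_left)
  also have "\<dots> = (\<Sum>s'\<in>configs L. \<Sum>cols\<in>PiE {..<L} (\<lambda>_. configs t).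
        G (\<lambda>i\<in>{..<L}. s' ! i # cols i))"
  proof (intro sum.cong refl)
    fix s' cols
    have "G (\<lambda>i\<in>{..<L}. s' ! i # cols i) = (\<Prod>i<L. (kf (s ! i) (s' ! i) * fexp (h i) (s' ! i) * colw \<phi> (h i) (s' ! i # cols i))
          * (isg (s' ! i) (s' ! ((i + 1) mod L)) * bd (cols i) (cols ((i + 1) mod L))))"
      unfolding G_def using modL by (intro prod.cong) (auto simp: mult_ac)
    also have "\<dots> = (\<Prod>i<L. kf (s ! i) (s' ! i)) * ((\<Prod>i<L. isg (s' ! i) (s' ! ((i + 1) mod L))) * (\<Prod>i<L. fexp (h i) (s' ! i))) *
        (\<Prod>i<L. colw \<phi> (h i) (s' ! i # cols i) * bd (cols i) (cols ((i + 1) mod L)))"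
      by (simp add: prod.distrib mult_ac)
    finally show "(\<Prod>i<L. kf (s ! i) (s' ! i)) * ((\<Prod>i<L. isg (s' ! i) (s' ! ((i + 1) mod L))) * (\<Prod>i<L. fexp (h i) (s' ! i))) *
        (\<Prod>i<L. colw \<phi> (h i) (s' ! i # cols i) * bd (cols i) (cols ((i + 1) mod L))) = G (\<lambda>i\<in>{..<L}. s' ! i # cols i)" by simp
  qed
  also have "\<dots> = (\<Sum>(s', cols)\<in>configs L \<times> PiE {..<L} (\<lambda>_. configs t). G (\<lambda>i\<in>{..<L}. s' ! i # cols i))"
    by (rule sum.cartesian_product)
  also have "\<dots> = (\<Sum>cols\<in>PiE {..<L} (\<lambda>_. configs (Suc t)). G cols)"
  proof (rule sum.reindex_bij_witness[where j = "\<lambda>(s', cols). (\<lambda>i\<in>{..<L}. s' ! i # cols i)"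
        and i = "\<lambda>c. (map (\<lambda>k. hd (c k)) [0..<L], \<lambda>k\<in>{..<L}. tl (c k))"])
    fix a assume a: "a \<in> configs L \<times> PiE {..<L} (\<lambda>_. configs t)"
    then obtain s' cols where a': "a = (s', cols)" "length s' = L" "cols \<in> PiE {..<L} (\<lambda>_. configs t)"
      by (auto simp: configs_def)
    have e1: "map (\<lambda>k. hd ((\<lambda>i\<in>{..<L}. s' ! i # cols i) k)) [0..<L] = s'"
      using a'(2) by (intro nth_equalityI) auto
    have e2: "(\<lambda>k\<in>{..<L}. tl ((\<lambda>i\<in>{..<L}. s' ! i # cols i) k)) = cols"
      using a'(3) by (auto simp: PiE_iff extensional_def fun_eq_iff)
    show "(\<lambda>c. (map (\<lambda>k. hd (c k)) [0..<L], \<lambda>k\<in>{..<L}. tl (c k))) ((\<lambda>(s', cols). (\<lambda>i\<in>{..<L}. s' ! i # cols i)) a) = a"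
      unfolding a'(1) using e1 e2 by simp
    show "(\<lambda>(s', cols). (\<lambda>i\<in>{..<L}. s' ! i # cols i)) a \<in> PiE {..<L} (\<lambda>_. configs (Suc t))"
      unfolding a'(1) using a'(3) by (auto simp: configs_def PiE_iff)
    show "G ((\<lambda>(s', cols). (\<lambda>i\<in>{..<L}. s' ! i # cols i)) a) = (case a of (s', cols) \<Rightarrow> G (\<lambda>i\<in>{..<L}. s' ! i # cols i))"
      unfolding a'(1) by simp
  next
    fix b assume b: "b \<in> PiE {..<L} (\<lambda>_. configs (Suc t))"
    have ne: "k < L \<Longrightarrow> b k \<noteq> []" for k
    proof -
      assume "k < L" then have "length (b k) = Suc t" using b by (auto simp: configs_def PiE_iff)
      then show ?thesis by auto
    qed
    show "(\<lambda>(s', cols). (\<lambda>i\<in>{..<L}. s' ! i # cols i)) (map (\<lambda>k. hd (b k)) [0..<L], \<lambda>k\<in>{..<L}. tl (b k)) = b"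
      using b ne by (auto simp: PiE_iff extensional_def fun_eq_iff)
    show "(map (\<lambda>k. hd (b k)) [0..<L], \<lambda>k\<in>{..<L}. tl (b k)) \<in> configs L \<times> PiE {..<L} (\<lambda>_. configs t)"
      using b by (auto simp: configs_def PiE_iff)
  qed
  also have "\<dots> = ringamp \<phi> h L (Suc t) s" unfolding ringamp_def G_def ..
  finally show ?thesis .
qed

lemma ring_base: "prod_state L (\<lambda>_. pi / 2) (\<lambda>_. \<phi>) s = ringamp \<phi> h L 0 s"
proof -
  have "PiE {..<L} (\<lambda>_. configs 0) = {\<lambda>i\<in>{..<L}. []}"
    by (simp add: configs_def PiE_singleton[symmetric])
  then show ?thesis
    unfolding ringamp_def prod_state_def by (simp add: ini_def)
qed

lemma floquet_cong:
  assumes "\<And>x. x \<in> configs L \<Longrightarrow> \<psi> x = \<psi>' x"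
  shows "floquet L J b h \<psi> s = floquet L J b h \<psi>' s"
  unfolding floquet_def using assms by (intro sum.cong refl) simp_all

lemma psi_ring:
  assumes s: "s \<in> configs L" and L: "L \<ge> 1"
  shows "(floquet L (pi / 4) (- pi / 4) h ^^ t) (prod_state L (\<lambda>_. pi / 2) (\<lambda>_. \<phi>)) s = ringamp \<phi> h L t s"
  using s
proof (induction t arbitrary: s)
  case 0
  then show ?case by (simp add: ring_base)
next
  case (Suc t)
  have "(floquet L (pi / 4) (- pi / 4) h ^^ Suc t) (prod_state L (\<lambda>_. pi / 2) (\<lambda>_. \<phi>)) s
     = floquet L (pi / 4) (- pi / 4) h ((floquet L (pi / 4) (- pi / 4) h ^^ t) (prod_state L (\<lambda>_. pi / 2) (\<lambda>_. \<phi>))) s"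
    by simp
  also have "\<dots> = floquet L (pi / 4) (- pi / 4) h (ringamp \<phi> h L t) s"
    by (rule floquet_cong) (rule Suc.IH)
  also have "\<dots> = ringamp \<phi> h L (Suc t) s" using floquet_ring[OF Suc.prems L] .
  finally show ?case .
qed

definition colsets :: "nat \<Rightarrow> nat \<Rightarrow> bool list \<Rightarrow> bool list \<Rightarrow> (nat \<Rightarrow> bool list) set" where
  "colsets t m \<alpha> \<beta> = {K \<in> PiE {..m} (\<lambda>_. configs t). K 0 = \<alpha> \<and> K m = \<beta>}"

definition chain :: "nat \<Rightarrow> (nat \<Rightarrow> bool list \<Rightarrow> bool list \<Rightarrow> complex) \<Rightarrow> nat \<Rightarrow> bool list \<Rightarrow> bool list \<Rightarrow> complex" where
  "chain t F m \<alpha> \<beta> = (\<Sum>K\<in>colsets t m \<alpha> \<beta>. \<Prod>j<m. F j (K j) (K (Suc j)))"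

lemma finite_configs[simp]: "finite (configs n)"
proof -
  have "configs n = {xs. set xs \<subseteq> (UNIV :: bool set) \<and> length xs = n}" unfolding configs_def by auto
  moreover have "finite {xs. set xs \<subseteq> (UNIV :: bool set) \<and> length xs = n}"
    by (rule finite_lists_length_eq) simp
  ultimately show ?thesis by (simp only:)
qed

lemma card_configs: "card (configs n) = 2 ^ n"
proof -
  have "configs n = {xs. set xs \<subseteq> (UNIV :: bool set) \<and> length xs = n}" unfolding configs_def by auto
  moreover have "card {xs. set xs \<subseteq> (UNIV :: bool set) \<and> length xs = n} = card (UNIV :: bool set) ^ n"
    by (rule card_lists_length_eq) simp
  ultimately show ?thesis by (simp only: card_UNIV_bool)
qed

lemma finite_colsets[simp]: "finite (colsets t m \<alpha> \<beta>)"
  unfolding colsets_def by (rule finite_subset[OF _ finite_PiE[of "{..m}" "\<lambda>_. configs t"]]) auto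

lemma colsets_0: "colsets t 0 \<alpha> \<beta> = (if \<alpha> = \<beta> \<and> \<alpha> \<in> configs t then {\<lambda>i\<in>{..0}. \<alpha>} else {})"
proof -
  have "K \<in> PiE {..0} (\<lambda>_. configs t) \<Longrightarrow> K = (\<lambda>i\<in>{..0::nat}. K 0)" for K
    by (auto simp: PiE_iff extensional_def fun_eq_iff)
  then show ?thesis unfolding colsets_def by (auto simp: PiE_iff)
qed

lemma chain_0: "\<alpha> \<in> configs t \<Longrightarrow> chain t F 0 \<alpha> \<beta> = (if \<alpha> = \<beta> then 1 else 0)"
  unfolding chain_def colsets_0 by simp

lemma chain_Suc:
  assumes "\<alpha> \<in> configs t"
  shows "chain t F (Suc m) \<alpha> \<beta> = (\<Sum>c\<in>configs t. F 0 \<alpha> c * chain t (\<lambda>j. F (Suc j)) m c \<beta>)"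
proof -
  have "(\<Sum>c\<in>configs t. F 0 \<alpha> c * chain t (\<lambda>j. F (Suc j)) m c \<beta>)
      = (\<Sum>c\<in>configs t. \<Sum>K\<in>colsets t m c \<beta>. F 0 \<alpha> c * (\<Prod>j<m. F (Suc j) (K j) (K (Suc j))))"
    unfolding chain_def by (simp add: sum_distrib_left)
  also have "\<dots> = (\<Sum>(c, K)\<in>Sigma (configs t) (\<lambda>c. colsets t m c \<beta>). F 0 \<alpha> c * (\<Prod>j<m. F (Suc j) (K j) (K (Suc j))))"
    by (rule sum.Sigma) auto
  also have "\<dots> = chain t F (Suc m) \<alpha> \<beta>"
    unfolding chain_def
  proof (rule sum.reindex_bij_witness[where j = "\<lambda>(c, K). (\<lambda>i\<in>{..Suc m}. if i = 0 then \<alpha> else K (i - 1))"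
        and i = "\<lambda>K. (K 1, \<lambda>i\<in>{..m}. K (Suc i))"])
    fix a assume a: "a \<in> Sigma (configs t) (\<lambda>c. colsets t m c \<beta>)"
    then obtain c K where a': "a = (c, K)" "c \<in> configs t" "K \<in> colsets t m c \<beta>" by auto
    then have K: "K \<in> PiE {..m} (\<lambda>_. configs t)" "K 0 = c" "K m = \<beta>" unfolding colsets_def by auto
    show "(\<lambda>K. (K 1, \<lambda>i\<in>{..m}. K (Suc i))) ((\<lambda>(c, K). \<lambda>i\<in>{..Suc m}. if i = 0 then \<alpha> else K (i - 1)) a) = a"
      unfolding a'(1) using K by (auto simp: PiE_iff extensional_def fun_eq_iff)
    show "(\<lambda>(c, K). \<lambda>i\<in>{..Suc m}. if i = 0 then \<alpha> else K (i - 1)) a \<in> colsets t (Suc m) \<alpha> \<beta>"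
      unfolding a'(1) colsets_def using K assms by (auto simp: PiE_iff)
    have "(\<Prod>j<Suc m. F j ((\<lambda>i\<in>{..Suc m}. if i = 0 then \<alpha> else K (i - 1)) j) ((\<lambda>i\<in>{..Suc m}. if i = 0 then \<alpha> else K (i - 1)) (Suc j)))
        = F 0 \<alpha> (K 0) * (\<Prod>j<m. F (Suc j) (K j) (K (Suc j)))"
      by (subst prod.lessThan_Suc_shift) simp
    then show "(\<Prod>j<Suc m. F j ((\<lambda>(c, K). \<lambda>i\<in>{..Suc m}. if i = 0 then \<alpha> else K (i - 1)) a j) ((\<lambda>(c, K). \<lambda>i\<in>{..Suc m}. if i = 0 then \<alpha> else K (i - 1)) a (Suc j)))
        = (case a of (c, K) \<Rightarrow> F 0 \<alpha> c * (\<Prod>j<m. F (Suc j) (K j) (K (Suc j))))"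
      unfolding a'(1) using K by simp
  next
    fix K assume K: "K \<in> colsets t (Suc m) \<alpha> \<beta>"
    then have K': "K \<in> PiE {..Suc m} (\<lambda>_. configs t)" "K 0 = \<alpha>" "K (Suc m) = \<beta>" unfolding colsets_def by auto
    show "(\<lambda>(c, K). \<lambda>i\<in>{..Suc m}. if i = 0 then \<alpha> else K (i - 1)) ((\<lambda>K. (K 1, \<lambda>i\<in>{..m}. K (Suc i))) K) = K"
      using K' by (auto simp: PiE_iff extensional_def fun_eq_iff gr0_conv_Suc)
    show "(\<lambda>K. (K 1, \<lambda>i\<in>{..m}. K (Suc i))) K \<in> Sigma (configs t) (\<lambda>c. colsets t m c \<beta>)"
      using K' unfolding colsets_def by (auto simp: PiE_iff)
  qed
  finally show ?thesis by simp
qed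

lemma chain_cong:
  assumes "\<And>j c d. j < m \<Longrightarrow> F j c d = G j c d"
  shows "chain t F m \<alpha> \<beta> = chain t G m \<alpha> \<beta>"
  unfolding chain_def using assms by (intro sum.cong prod.cong) auto

lemma chain_add:
  assumes "\<alpha> \<in> configs t"
  shows "chain t F (m + n) \<alpha> \<beta> = (\<Sum>\<delta>\<in>configs t. chain t F m \<alpha> \<delta> * chain t (\<lambda>j. F (m + j)) n \<delta> \<beta>)"
  using assms
proof (induction m arbitrary: F \<alpha>)
  case 0
  have "(\<Sum>\<delta>\<in>configs t. chain t F 0 \<alpha> \<delta> * chain t (\<lambda>j. F (0 + j)) n \<delta> \<beta>)
      = (\<Sum>\<delta>\<in>configs t. if \<alpha> = \<delta> then chain t F n \<delta> \<beta> else 0)"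
    using 0 by (intro sum.cong refl) (simp add: chain_0)
  also have "\<dots> = chain t F n \<alpha> \<beta>" using 0 by (simp add: sum.delta)
  finally show ?case by simp
next
  case (Suc m)
  have "chain t F (Suc m + n) \<alpha> \<beta> = (\<Sum>c\<in>configs t. F 0 \<alpha> c * chain t (\<lambda>j. F (Suc j)) (m + n) c \<beta>)"
    using chain_Suc[OF Suc.prems] by simp
  also have "\<dots> = (\<Sum>c\<in>configs t. F 0 \<alpha> c * (\<Sum>\<delta>\<in>configs t. chain t (\<lambda>j. F (Suc j)) m c \<delta> * chain t (\<lambda>j. F (Suc (m + j))) n \<delta> \<beta>))"
    using Suc.IH by simp
  also have "\<dots> = (\<Sum>\<delta>\<in>configs t. (\<Sum>c\<in>configs t. F 0 \<alpha> c * chain t (\<lambda>j. F (Suc j)) m c \<delta>) * chain t (\<lambda>j. F (Suc (m + j))) n \<delta> \<beta>)"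
    by (simp add: sum_distrib_left sum_distrib_right mult.assoc) (rule sum.swap)
  also have "\<dots> = (\<Sum>\<delta>\<in>configs t. chain t F (Suc m) \<alpha> \<delta> * chain t (\<lambda>j. F (Suc m + j)) n \<delta> \<beta>)"
    using chain_Suc[OF Suc.prems] by simp
  finally show ?case .
qed

lemma ring_chain:
  assumes L: "L \<ge> 1"
  shows "ringamp \<phi> h L t s = (\<Sum>\<gamma>\<in>configs t. chain t (\<lambda>j c d. colw \<phi> (h j) (s ! j # c) * bd c d) L \<gamma> \<gamma>)"
proof -
  define F where "F = (\<lambda>j c d. colw \<phi> (h j) (s ! j # c) * bd c d)"
  have "(\<Sum>\<gamma>\<in>configs t. chain t F L \<gamma> \<gamma>) = (\<Sum>(\<gamma>, K)\<in>Sigma (configs t) (\<lambda>\<gamma>. colsets t L \<gamma> \<gamma>). \<Prod>j<L. F j (K j) (K (Suc j)))"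
    unfolding chain_def by (rule sum.Sigma) auto
  also have "\<dots> = ringamp \<phi> h L t s"
    unfolding ringamp_def
  proof (rule sum.reindex_bij_witness[where j = "\<lambda>(\<gamma>, K). (\<lambda>i\<in>{..<L}. K i)"
        and i = "\<lambda>cols. (cols 0, \<lambda>i\<in>{..L}. cols (i mod L))"])
    fix a assume a: "a \<in> Sigma (configs t) (\<lambda>\<gamma>. colsets t L \<gamma> \<gamma>)"
    then obtain \<gamma> K where a': "a = (\<gamma>, K)" "\<gamma> \<in> configs t" "K \<in> colsets t L \<gamma> \<gamma>" by auto
    then have K: "K \<in> PiE {..L} (\<lambda>_. configs t)" "K 0 = \<gamma>" "K L = \<gamma>" unfolding colsets_def by auto
    have e: "(\<lambda>i\<in>{..L}. (\<lambda>i\<in>{..<L}. K i) (i mod L)) = K"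
    proof
      fix i show "(\<lambda>i\<in>{..L}. (\<lambda>i\<in>{..<L}. K i) (i mod L)) i = K i"
        using K L by (cases "i \<le> L") (auto simp: PiE_iff extensional_def le_less)
    qed
    show "(\<lambda>cols. (cols 0, \<lambda>i\<in>{..L}. cols (i mod L))) ((\<lambda>(\<gamma>, K). \<lambda>i\<in>{..<L}. K i) a) = a"
      unfolding a'(1) using e K L by simp
    show "(\<lambda>(\<gamma>, K). \<lambda>i\<in>{..<L}. K i) a \<in> PiE {..<L} (\<lambda>_. configs t)"
      unfolding a'(1) using K by (auto simp: PiE_iff)
    have "(\<Prod>i<L. colw \<phi> (h i) (s ! i # (\<lambda>i\<in>{..<L}. K i) i) * bd ((\<lambda>i\<in>{..<L}. K i) i) ((\<lambda>i\<in>{..<L}. K i) ((i + 1) mod L)))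
       = (\<Prod>j<L. F j (K j) (K (Suc j)))"
    proof (intro prod.cong refl)
      fix i assume i: "i \<in> {..<L}"
      have "(\<lambda>i\<in>{..<L}. K i) ((i + 1) mod L) = K (Suc i)"
        using i K L by (cases "Suc i = L") auto
      then show "colw \<phi> (h i) (s ! i # (\<lambda>i\<in>{..<L}. K i) i) * bd ((\<lambda>i\<in>{..<L}. K i) i) ((\<lambda>i\<in>{..<L}. K i) ((i + 1) mod L))
          = F i (K i) (K (Suc i))" using i unfolding F_def by simp
    qed
    then show "(\<Prod>i<L. colw \<phi> (h i) (s ! i # (\<lambda>(\<gamma>, K). \<lambda>i\<in>{..<L}. K i) a i) * bd ((\<lambda>(\<gamma>, K). \<lambda>i\<in>{..<L}. K i) a i) ((\<lambda>(\<gamma>, K). \<lambda>i\<in>{..<L}. K i) a ((i + 1) mod L)))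
        = (case a of (\<gamma>, K) \<Rightarrow> \<Prod>j<L. F j (K j) (K (Suc j)))"
      unfolding a'(1) by simp
  next
    fix cols assume c: "cols \<in> PiE {..<L} (\<lambda>_. configs t)"
    show "(\<lambda>(\<gamma>, K). \<lambda>i\<in>{..<L}. K i) ((\<lambda>cols. (cols 0, \<lambda>i\<in>{..L}. cols (i mod L))) cols) = cols"
      using c by (auto simp: PiE_iff extensional_def fun_eq_iff)
    show "(\<lambda>cols. (cols 0, \<lambda>i\<in>{..L}. cols (i mod L))) cols \<in> Sigma (configs t) (\<lambda>\<gamma>. colsets t L \<gamma> \<gamma>)"
      using c L unfolding colsets_def by (auto simp: PiE_iff)
  qed
  finally show ?thesis unfolding F_def by simp
qed

definition sg :: "bool \<Rightarrow> complex" where "sg b = (if b then -1 else 1)"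

lemma sg_simps[simp]: "sg True = -1" "sg False = 1" by (simp_all add: sg_def)

lemma sq2: "(complex_of_real (sqrt 2))\<^sup>2 = 2"
  by (simp flip: of_real_power)

lemma pair_flip:
  fixes G :: "bool \<Rightarrow> bool \<Rightarrow> complex"
  assumes G: "\<And>a b. G a b = (if a = b then u else v)"
    and uu: "u * cnj u = v * cnj v" and uv: "u * cnj v = - (v * cnj u)"
  shows "G a (\<not> b) * cnj (G a' (\<not> b)) = sg (a \<noteq> a') * (G a b * cnj (G a' b))"
    and "G (\<not> a) b * cnj (G (\<not> a) b') = sg (b \<noteq> b') * (G a b * cnj (G a b'))"
  using uu uv by (cases a; cases a'; cases b; cases b'; simp add: G; simp add: mult.commute)+

lemma kf_if: "kf a b = (if a = b then complex_of_real (cos (- pi / 4)) else - \<i> * complex_of_real (sin (- pi / 4)))"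
  by (simp add: kf_def)

lemma kf_uu: "complex_of_real (cos (- pi / 4)) * cnj (complex_of_real (cos (- pi / 4)))
   = (- \<i> * complex_of_real (sin (- pi / 4))) * cnj (- \<i> * complex_of_real (sin (- pi / 4)))"
proof -
  have c: "cos (- pi / 4) = sqrt 2 / 2" using cos_45 by (simp add: minus_divide_left[symmetric])
  have s: "sin (- pi / 4) = - (sqrt 2 / 2)" using sin_45 by (simp add: minus_divide_left[symmetric])
  show ?thesis unfolding c s by (simp add: power2_eq_square[symmetric] power_mult_distrib power_divide sq2)
qed

lemma kf_uv: "complex_of_real (cos (- pi / 4)) * cnj (- \<i> * complex_of_real (sin (- pi / 4)))
   = - ((- \<i> * complex_of_real (sin (- pi / 4))) * cnj (complex_of_real (cos (- pi / 4))))"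
  by simp

lemmas kf_flip = pair_flip[of kf, OF kf_if kf_uu kf_uv]

lemma isg_if: "isg a b = (if a = b then exp (- \<i> * complex_of_real (pi / 4)) else exp (\<i> * complex_of_real (pi / 4)))"
  by (simp add: isg_def sp_def)

lemma exp_i_cnj: "cnj (exp (\<i> * complex_of_real x)) = exp (- \<i> * complex_of_real x)"
  by (simp add: exp_cnj)

lemma isg_uu: "exp (- \<i> * complex_of_real (pi / 4)) * cnj (exp (- \<i> * complex_of_real (pi / 4)))
   = exp (\<i> * complex_of_real (pi / 4)) * cnj (exp (\<i> * complex_of_real (pi / 4)))"
  by (simp add: exp_cnj exp_add[symmetric])

lemma isg_uv: "exp (- \<i> * complex_of_real (pi / 4)) * cnj (exp (\<i> * complex_of_real (pi / 4)))
   = - (exp (\<i> * complex_of_real (pi / 4)) * cnj (exp (- \<i> * complex_of_real (pi / 4))))"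
proof -
  have "exp (- \<i> * complex_of_real (pi / 4)) * cnj (exp (\<i> * complex_of_real (pi / 4))) = cis (- (pi / 2))"
    by (simp add: exp_cnj exp_add[symmetric] cis_conv_exp; simp add: algebra_simps)
  moreover have "exp (\<i> * complex_of_real (pi / 4)) * cnj (exp (- \<i> * complex_of_real (pi / 4))) = cis (pi / 2)"
    by (simp add: exp_cnj exp_add[symmetric] cis_conv_exp; simp add: algebra_simps)
  moreover have "cis (- (pi / 2)) = - cis (pi / 2)" by (simp add: cis.ctr complex_eq_iff)
  ultimately show ?thesis by simp
qed

lemmas isg_flip = pair_flip[of isg, OF isg_if isg_uu isg_uv]

lemma fexp_abs: "fexp hh a * cnj (fexp hh a) = 1"
  by (simp add: fexp_def exp_cnj exp_add[symmetric])

lemma ini_abs: "ini \<phi> a * cnj (ini \<phi> a) = 1 / 2"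
proof -
  have c: "cos (pi / 2 / 2) = sqrt 2 / 2" using cos_45 by simp
  have s: "sin (pi / 2 / 2) = sqrt 2 / 2" using sin_45 by simp
  have e: "exp (\<i> * complex_of_real \<phi>) * cnj (exp (\<i> * complex_of_real \<phi>)) = 1"
    by (simp add: exp_cnj exp_add[symmetric])
  show ?thesis
  proof (cases a)
    case True then show ?thesis unfolding ini_def c by (simp add: power2_eq_square[symmetric] power_divide sq2)
  next
    case False
    have "ini \<phi> a * cnj (ini \<phi> a) = (exp (\<i> * complex_of_real \<phi>) * cnj (exp (\<i> * complex_of_real \<phi>))) * (complex_of_real (sqrt 2 / 2))\<^sup>2"
      unfolding ini_def s using False by (simp add: power2_eq_square mult_ac)
    also have "\<dots> = 1 / 2" unfolding e by (simp add: power_divide sq2)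
    finally show ?thesis .
  qed
qed

lemma kf_abs: "kf a b * cnj (kf a b) = 1 / 2"
proof -
  have c: "cos (- pi / 4) = sqrt 2 / 2" using cos_45 by (simp add: minus_divide_left[symmetric])
  have s: "sin (- pi / 4) = - (sqrt 2 / 2)" using sin_45 by (simp add: minus_divide_left[symmetric])
  show ?thesis unfolding kf_def c s by (simp add: power2_eq_square[symmetric] power_divide power_mult_distrib sq2)
qed

lemma isg_abs: "isg a b * cnj (isg a b) = 1"
  by (simp add: isg_def exp_cnj exp_add[symmetric])

definition flp :: "bool list \<Rightarrow> nat \<Rightarrow> bool list" where "flp e p = e[p := (\<not> e ! p)]"

lemma length_flp[simp]: "length (flp e p) = length e" by (simp add: flp_def)

lemma nth_flp: "q < length e \<Longrightarrow> flp e p ! q = (if q = p then \<not> e ! p else e ! q)"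
  by (simp add: flp_def nth_list_update)

lemma flp_flp[simp]: "flp (flp e p) p = e"
  by (cases "p < length e") (simp_all add: flp_def list_update_beyond)

lemma colw_closed:
  "e \<noteq> [] \<Longrightarrow> colw \<phi> hh e = ini \<phi> (last e) * (\<Prod>q<length e - 1. kf (e ! q) (e ! Suc q) * fexp hh (e ! Suc q))"
proof (induction \<phi> hh e rule: colw.induct)
  case (1 \<phi> hh) then show ?case by simp
next
  case (2 \<phi> hh x) then show ?case by simp
next
  case (3 \<phi> hh x y r)
  then show ?case by (simp add: prod.lessThan_Suc_shift del: prod.lessThan_Suc)
qed

lemma bd_closed: "length c = length d \<Longrightarrow> bd c d = (\<Prod>q<length c. isg (c ! q) (d ! q))"
proof (induction c arbitrary: d)
  case Nil then show ?case by simp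
next
  case (Cons a c) then show ?case
    by (cases d) (simp_all add: prod.lessThan_Suc_shift del: prod.lessThan_Suc)
qed

definition Wd :: "real \<Rightarrow> real \<Rightarrow> bool list \<Rightarrow> bool list \<Rightarrow> complex" where
  "Wd \<phi> hh e e' = colw \<phi> hh e * cnj (colw \<phi> hh e')"

definition PW :: "real \<Rightarrow> bool list \<Rightarrow> bool list \<Rightarrow> nat \<Rightarrow> complex" where
  "PW hh e e' q = (kf (e ! q) (e ! Suc q) * cnj (kf (e' ! q) (e' ! Suc q))) * (fexp hh (e ! Suc q) * cnj (fexp hh (e' ! Suc q)))"

lemma Wd_closed:
  assumes "e \<noteq> []" "length e' = length e"
  shows "Wd \<phi> hh e e' = (ini \<phi> (last e) * cnj (ini \<phi> (last e'))) * (\<Prod>q<length e - 1. PW hh e e' q)"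
proof -
  have e': "e' \<noteq> []" using assms by auto
  show ?thesis
    unfolding Wd_def colw_closed[OF assms(1)] colw_closed[OF e'] PW_def
    using assms(2) by (simp add: cnj_prod prod.distrib mult_ac)
qed

lemma prod_if_one: "finite S \<Longrightarrow> (\<Prod>q\<in>S. if q = a then c else 1) = (if a \<in> S then c else (1::complex))"
  by (simp add: prod.delta)

lemma Wd_flip:
  assumes len: "length e' = length e" and p: "p < length e" and ep: "e ! p = e' ! p"
  shows "Wd \<phi> hh (flp e p) (flp e' p) =
     sg (0 < p \<and> e ! (p - 1) \<noteq> e' ! (p - 1)) * sg (Suc p < length e \<and> e ! Suc p \<noteq> e' ! Suc p) * Wd \<phi> hh e e'"
proof -
  define n where "n = length e - 1"
  define sU where "sU = sg (0 < p \<and> e ! (p - 1) \<noteq> e' ! (p - 1))"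
  define sD where "sD = sg (Suc p < length e \<and> e ! Suc p \<noteq> e' ! Suc p)"
  have ne: "e \<noteq> []" using p by auto
  have ne2: "flp e p \<noteq> []" using ne by (simp add: flp_def)
  have ln: "length e = Suc n" using ne unfolding n_def by simp
  have pn: "p \<le> n" using p ln by simp
  have ne': "e' \<noteq> []" using ne len by auto
  have lastf: "last (flp e p) = flp e p ! n" "last (flp e' p) = flp e' p ! n" "last e = e ! n" "last e' = e' ! n"
    using ne ne' len unfolding n_def flp_def by (simp_all add: last_conv_nth)
  have ini_eq: "ini \<phi> (last (flp e p)) * cnj (ini \<phi> (last (flp e' p))) = ini \<phi> (last e) * cnj (ini \<phi> (last e'))"
  proof (cases "p = n")
    case True
    then show ?thesis unfolding lastf using ep ln len by (simp add: nth_flp ini_abs)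
  next
    case False
    then show ?thesis unfolding lastf using ln len by (simp add: nth_flp)
  qed
  have pw: "PW hh (flp e p) (flp e' p) q = (if q = p - 1 then sU else 1) * ((if q = p then sD else 1) * PW hh e e' q)"
    if q: "q < n" for q
  proof -
    have qe: "q < length e" "Suc q < length e" using q ln by auto
    show ?thesis
    proof (cases "Suc q = p")
      case True
      have "PW hh (flp e p) (flp e' p) q = kf (e ! q) (\<not> e ! p) * cnj (kf (e' ! q) (\<not> e ! p)) * (fexp hh (\<not> e ! p) * cnj (fexp hh (\<not> e ! p)))"
        unfolding PW_def using qe len True ep by (simp add: nth_flp)
      also have "\<dots> = sg (e ! q \<noteq> e' ! q) * (kf (e ! q) (e ! p) * cnj (kf (e' ! q) (e ! p)))"
        by (simp add: kf_flip(1) fexp_abs)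
      also have "\<dots> = sU * PW hh e e' q"
      proof -
        have pq: "p - 1 = q" "0 < p" using True by auto
        show ?thesis unfolding PW_def sU_def pq using True ep by (simp add: fexp_abs)
      qed
      finally show ?thesis using True by simp
    next
      case F1: False
      show ?thesis
      proof (cases "q = p")
        case True
        have "PW hh (flp e p) (flp e' p) q = kf (\<not> e ! p) (e ! Suc p) * cnj (kf (\<not> e ! p) (e' ! Suc p)) * (fexp hh (e ! Suc p) * cnj (fexp hh (e' ! Suc p)))"
          unfolding PW_def using qe len True ep by (simp add: nth_flp)
        also have "\<dots> = sg (e ! Suc p \<noteq> e' ! Suc p) * (kf (e ! p) (e ! Suc p) * cnj (kf (e ! p) (e' ! Suc p))) * (fexp hh (e ! Suc p) * cnj (fexp hh (e' ! Suc p)))"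
          by (simp add: kf_flip(2))
        also have "\<dots> = sD * PW hh e e' q"
          unfolding PW_def sD_def using True ep qe by simp
        moreover have "(if q = p - 1 then sU else 1) = 1" using True by (cases "p = 0") (auto simp: sU_def)
        ultimately show ?thesis using True by simp
      next
        case False
        then show ?thesis using F1 qe len unfolding PW_def by (auto simp: nth_flp)
      qed
    qed
  qed
  have "(\<Prod>q<n. PW hh (flp e p) (flp e' p) q) = (\<Prod>q<n. if q = p - 1 then sU else 1) * ((\<Prod>q<n. if q = p then sD else 1) * (\<Prod>q<n. PW hh e e' q))"
    using pw by (simp add: prod.distrib)
  also have "(\<Prod>q<n. if q = p - 1 then sU else 1) = sU"
    using pn unfolding sU_def by (cases p) (simp_all add: prod_if_one)
  also have "(\<Prod>q<n. if q = p then sD else 1) = sD"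
    using pn ln unfolding sD_def by (simp add: prod_if_one)
  finally have pr: "(\<Prod>q<n. PW hh (flp e p) (flp e' p) q) = sU * (sD * (\<Prod>q<n. PW hh e e' q))" .
  have w1: "Wd \<phi> hh (flp e p) (flp e' p) = (ini \<phi> (last (flp e p)) * cnj (ini \<phi> (last (flp e' p)))) * (\<Prod>q<n. PW hh (flp e p) (flp e' p) q)"
    using Wd_closed[OF ne2, of "flp e' p"] len unfolding n_def by simp
  have w2: "Wd \<phi> hh e e' = (ini \<phi> (last e) * cnj (ini \<phi> (last e'))) * (\<Prod>q<n. PW hh e e' q)"
    using Wd_closed[OF ne len] unfolding n_def by simp
  show ?thesis
    unfolding w1 w2 ini_eq pr sU_def[symmetric] sD_def[symmetric] by (simp add: mult_ac)
qed

definition Bd :: "bool list \<Rightarrow> bool list \<Rightarrow> bool list \<Rightarrow> bool list \<Rightarrow> complex" where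
  "Bd c c' d d' = bd c d * cnj (bd c' d')"

lemma Bd_closed:
  assumes "length c = t" "length c' = t" "length d = t" "length d' = t"
  shows "Bd c c' d d' = (\<Prod>q<t. isg (c ! q) (d ! q) * cnj (isg (c' ! q) (d' ! q)))"
  unfolding Bd_def using assms by (simp add: bd_closed cnj_prod prod.distrib)

lemma Bd_flip_left:
  assumes l: "length c = t" "length c' = t" "length d = t" "length d' = t" and p: "p < t" and cp: "c ! p = c' ! p"
  shows "Bd (flp c p) (flp c' p) d d' = sg (d ! p \<noteq> d' ! p) * Bd c c' d d'"
proof -
  have "(\<Prod>q<t. isg (flp c p ! q) (d ! q) * cnj (isg (flp c' p ! q) (d' ! q)))
      = (\<Prod>q<t. (if q = p then sg (d ! p \<noteq> d' ! p) else 1) * (isg (c ! q) (d ! q) * cnj (isg (c' ! q) (d' ! q))))"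
  proof (intro prod.cong refl)
    fix q assume "q \<in> {..<t}"
    then show "isg (flp c p ! q) (d ! q) * cnj (isg (flp c' p ! q) (d' ! q))
      = (if q = p then sg (d ! p \<noteq> d' ! p) else 1) * (isg (c ! q) (d ! q) * cnj (isg (c' ! q) (d' ! q)))"
      using l cp by (cases "q = p") (simp_all add: nth_flp isg_flip(2))
  qed
  then show ?thesis
    using l p by (simp add: Bd_closed prod.distrib prod_if_one)
qed

lemma Bd_flip_right:
  assumes l: "length c = t" "length c' = t" "length d = t" "length d' = t" and p: "p < t" and dp: "d ! p = d' ! p"
  shows "Bd c c' (flp d p) (flp d' p) = sg (c ! p \<noteq> c' ! p) * Bd c c' d d'"
proof -
  have "(\<Prod>q<t. isg (c ! q) (flp d p ! q) * cnj (isg (c' ! q) (flp d' p ! q)))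
      = (\<Prod>q<t. (if q = p then sg (c ! p \<noteq> c' ! p) else 1) * (isg (c ! q) (d ! q) * cnj (isg (c' ! q) (d' ! q))))"
  proof (intro prod.cong refl)
    fix q assume "q \<in> {..<t}"
    then show "isg (c ! q) (flp d p ! q) * cnj (isg (c' ! q) (flp d' p ! q))
      = (if q = p then sg (c ! p \<noteq> c' ! p) else 1) * (isg (c ! q) (d ! q) * cnj (isg (c' ! q) (d' ! q)))"
      using l dp by (cases "q = p") (simp_all add: nth_flp isg_flip(1))
  qed
  then show ?thesis
    using l p by (simp add: Bd_closed prod.distrib prod_if_one)
qed

lemma Wd_abs: "e \<noteq> [] \<Longrightarrow> Wd \<phi> hh e e = (1 / 2) ^ length e"
proof -
  assume ne: "e \<noteq> []"
  have "PW hh e e = (\<lambda>q. 1 / 2)" unfolding PW_def by (simp add: kf_abs fexp_abs fun_eq_iff)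
  then have "Wd \<phi> hh e e = 1 / 2 * (1 / 2) ^ (length e - 1)" using ne
    by (simp add: Wd_closed ini_abs)
  also have "\<dots> = (1 / 2) ^ length e" using ne by (cases e) simp_all
  finally show ?thesis .
qed

lemma Bd_abs: "length c = t \<Longrightarrow> length d = t \<Longrightarrow> Bd c c d d = 1"
  by (simp add: Bd_closed isg_abs)

lemma comb:
  fixes I :: "nat \<Rightarrow> nat \<Rightarrow> bool" and t l :: nat
  assumes t: "1 \<le> t" and l: "2 * t \<le> l"
    and top: "\<And>j. j < l \<Longrightarrow> I 0 j"
    and rl: "\<And>q j. q < t \<Longrightarrow> 0 < j \<Longrightarrow> j < l \<Longrightarrow> I q j \<Longrightarrow>
          \<not> ((\<not> I q (j - 1)) \<noteq> ((\<not> I q (Suc j)) \<noteq> ((0 < q \<and> \<not> I (q - 1) j) \<noteq> (Suc q < t \<and> \<not> I (Suc q) j))))"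
    and q: "q < t" and j: "j \<le> l"
  shows "I q j"
proof -
  have down: "I (Suc q) j" if "Suc q < t" "0 < j" "j < l" "I q j" "I q (j - 1)" "I q (Suc j)" "0 < q \<longrightarrow> I (q - 1) j" for q j
    using rl[of q j] that by auto
  have right: "I q (Suc j)" if "q < t" "0 < j" "j < l" "I q j" "I q (j - 1)" "0 < q \<longrightarrow> I (q - 1) j" "Suc q < t \<longrightarrow> I (Suc q) j" for q j
    using rl[of q j] that by auto
  have left: "I q (j - 1)" if "q < t" "0 < j" "j < l" "I q j" "I q (Suc j)" "0 < q \<longrightarrow> I (q - 1) j" "Suc q < t \<longrightarrow> I (Suc q) j" for q j
    using rl[of q j] that by auto
  have tri: "\<And>j. q \<le> j \<Longrightarrow> j + q < l \<Longrightarrow> I q j" if "q < t" for q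
    using that
  proof (induction q rule: less_induct)
    case (less q)
    show ?case
    proof (cases q)
      case 0 then show ?thesis using less top by simp
    next
      case (Suc q0)
      have r0: "\<And>j. q0 \<le> j \<Longrightarrow> j + q0 < l \<Longrightarrow> I q0 j" using less Suc by auto
      have r1: "0 < q0 \<Longrightarrow> I (q0 - 1) j" using less Suc by auto
      show ?thesis unfolding Suc
        using less Suc by (intro down) (auto intro!: r0 r1)
    qed
  qed
  define col where "col c = (\<forall>q<t. I q c)" for c
  have c0: "col (t - 1)" "col t" unfolding col_def using tri l t by auto
  have rs: "col (t - 1 + k)" if "t - 1 + k \<le> l" for k
    using that
  proof (induction k rule: less_induct)
    case (less k)
    show ?case
    proof (cases "k \<le> 1")
      case True then show ?thesis using c0 t by (cases k) auto
    next
      case False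
      have a: "col (t - 1 + (k - 1))" "col (t - 1 + (k - 2))"
        by (rule less.IH; use False less.prems in auto)+
      have e1: "t - 1 + (k - 1) = t - 1 + k - 1" "t - 1 + (k - 2) = t - 1 + k - 1 - 1" "Suc (t - 1 + k - 1) = t - 1 + k"
        using False t by auto
      show ?thesis unfolding col_def
      proof (intro allI impI)
        fix q assume "q < t"
        then show "I q (t - 1 + k)"
          using right[of q "t - 1 + k - 1"] a False t less.prems unfolding col_def e1 by auto
      qed
    qed
  qed
  have ls: "col (t - k)" if "k \<le> t" for k
    using that
  proof (induction k rule: less_induct)
    case (less k)
    show ?case
    proof (cases "k \<le> 1")
      case True then show ?thesis using c0 t by (cases k) auto
    next
      case False
      have a: "col (t - (k - 1))" "col (t - (k - 2))"
        by (rule less.IH; use False less.prems in auto)+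
      have e1: "t - (k - 1) = Suc (t - k)" "t - (k - 2) = Suc (Suc (t - k))" "Suc (t - k) - 1 = t - k"
        using False less.prems by auto
      show ?thesis unfolding col_def
      proof (intro allI impI)
        fix q assume "q < t"
        then show "I q (t - k)"
          using left[of q "Suc (t - k)"] a False t l less.prems unfolding col_def e1 by auto
      qed
    qed
  qed
  show ?thesis
  proof (cases "t - 1 \<le> j")
    case True
    then have "col (t - 1 + (j - (t - 1)))" using j by (intro rs) auto
    then show ?thesis using True q unfolding col_def by auto
  next
    case False
    then have "col (t - (t - j))" by (intro ls) auto
    then show ?thesis using False q unfolding col_def by auto
  qed
qed

definition segF :: "real \<Rightarrow> (nat \<Rightarrow> real) \<Rightarrow> bool list \<Rightarrow> nat \<Rightarrow> bool list \<Rightarrow> bool list \<Rightarrow> complex" where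
  "segF \<phi> h x = (\<lambda>j c d. colw \<phi> (h j) (x ! j # c) * bd c d)"

definition Sm :: "real \<Rightarrow> (nat \<Rightarrow> real) \<Rightarrow> nat \<Rightarrow> bool list \<Rightarrow> (nat \<Rightarrow> bool list) \<Rightarrow> (nat \<Rightarrow> bool list) \<Rightarrow> complex" where
  "Sm \<phi> h l x K B = (\<Prod>j<l. Wd \<phi> (h j) (x ! j # K j) (x ! j # B j) * Bd (K j) (B j) (K (Suc j)) (B (Suc j)))"

lemma colsets_len: "K \<in> colsets t m \<alpha> \<beta> \<Longrightarrow> j \<le> m \<Longrightarrow> length (K j) = t"
  unfolding colsets_def configs_def by (auto simp: PiE_iff)

lemma chain_cnj_expand:
  "chain t (segF \<phi> h x) l \<alpha> \<beta> * cnj (chain t (segF \<phi> h x) l \<alpha>' \<beta>')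
   = (\<Sum>K\<in>colsets t l \<alpha> \<beta>. \<Sum>B\<in>colsets t l \<alpha>' \<beta>'. Sm \<phi> h l x K B)"
  unfolding chain_def segF_def Sm_def
  by (simp add: sum_product cnj_sum cnj_prod prod.distrib[symmetric] Wd_def Bd_def mult_ac)

definition dif :: "(nat \<Rightarrow> bool list) \<Rightarrow> (nat \<Rightarrow> bool list) \<Rightarrow> nat \<Rightarrow> nat \<Rightarrow> bool" where
  "dif K B j q = (K j ! q \<noteq> B j ! q)"

definition oddv :: "nat \<Rightarrow> nat \<Rightarrow> (nat \<Rightarrow> bool list) \<Rightarrow> (nat \<Rightarrow> bool list) \<Rightarrow> nat + nat \<times> nat \<Rightarrow> bool" where
  "oddv t l K B v = (case v of Inl j \<Rightarrow> j < l \<and> dif K B j 0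
     | Inr qj \<Rightarrow> (case qj of (q, j) \<Rightarrow> q < t \<and> 0 < j \<and> j < l \<and> \<not> dif K B j q \<and>
         (dif K B (j - 1) q \<noteq> (dif K B (Suc j) q \<noteq>
           ((0 < q \<and> dif K B j (q - 1)) \<noteq> (Suc q < t \<and> dif K B j (Suc q)))))))"

definition flipv :: "nat + nat \<times> nat \<Rightarrow> bool list \<times> (nat \<Rightarrow> bool list) \<times> (nat \<Rightarrow> bool list)
    \<Rightarrow> bool list \<times> (nat \<Rightarrow> bool list) \<times> (nat \<Rightarrow> bool list)" where
  "flipv v p = (case p of (x, K, B) \<Rightarrow> (case v of Inl j \<Rightarrow> (flp x j, K, B)
      | Inr qj \<Rightarrow> (case qj of (q, j) \<Rightarrow> (x, K(j := flp (K j) q), B(j := flp (B j) q)))))"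

lemma oddv_cong:
  assumes "0 < t" and H: "\<And>j q. q < t \<Longrightarrow> dif K' B' j q = dif K B j q"
  shows "oddv t l K' B' v = oddv t l K B v"
proof (cases v)
  case (Inl j) then show ?thesis using H[of 0 j] assms(1) by (simp add: oddv_def)
next
  case (Inr qj)
  obtain q j where qj: "qj = (q, j)" by (cases qj)
  show ?thesis
  proof (cases "q < t")
    case True
    have e1: "(0 < q \<and> dif K' B' j (q - 1)) = (0 < q \<and> dif K B j (q - 1))"
      using H[of "q - 1" j] True by auto
    have e2: "(Suc q < t \<and> dif K' B' j (Suc q)) = (Suc q < t \<and> dif K B j (Suc q))"
      using H[of "Suc q" j] by auto
    have "oddv t l K' B' v = (q < t \<and> 0 < j \<and> j < l \<and> \<not> dif K' B' j q \<and>
         (dif K' B' (j - 1) q \<noteq> (dif K' B' (Suc j) q \<noteq>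
           ((0 < q \<and> dif K' B' j (q - 1)) \<noteq> (Suc q < t \<and> dif K' B' j (Suc q))))))"
      by (simp add: oddv_def Inr qj)
    also have "\<dots> = (q < t \<and> 0 < j \<and> j < l \<and> \<not> dif K B j q \<and>
         (dif K B (j - 1) q \<noteq> (dif K B (Suc j) q \<noteq>
           ((0 < q \<and> dif K B j (q - 1)) \<noteq> (Suc q < t \<and> dif K B j (Suc q))))))"
      unfolding e1 e2 H[OF True] by (rule refl)
    also have "\<dots> = oddv t l K B v"
      by (simp add: oddv_def Inr qj)
    finally show ?thesis .
  next
    case False then show ?thesis using Inr qj unfolding oddv_def by simp
  qed
qed

lemma flipv_ident:
  assumes p: "(x, K, B) \<in> configs l \<times> (colsets t l \<alpha> \<beta> \<times> colsets t l \<alpha>' \<beta>')" and o: "oddv t l K B v"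
    and f: "flipv v (x, K, B) = (x', K', B')" and qt: "q < t"
  shows "dif K' B' j q = dif K B j q"
proof (cases v)
  case (Inl j0) then show ?thesis using f by (simp add: flipv_def dif_def)
next
  case (Inr qj)
  obtain q0 j0 where qj: "qj = (q0, j0)" by (cases qj)
  have o': "q0 < t" "0 < j0" "j0 < l" "K j0 ! q0 = B j0 ! q0" using o Inr qj by (auto simp: oddv_def dif_def)
  have lens: "length (K j0) = t" "length (B j0) = t" using p o' by (auto intro: colsets_len)
  have KB: "K' = K(j0 := flp (K j0) q0)" "B' = B(j0 := flp (B j0) q0)" using f Inr qj by (auto simp: flipv_def)
  show ?thesis
  proof (cases "j = j0")
    case True then show ?thesis using KB lens qt o' by (auto simp: nth_flp dif_def)
  next
    case False then show ?thesis using KB by (simp add: dif_def)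
  qed
qed

lemma flipv_oddv:
  assumes t: "0 < t" and p: "(x, K, B) \<in> configs l \<times> (colsets t l \<alpha> \<beta> \<times> colsets t l \<alpha>' \<beta>')" and o: "oddv t l K B v"
    and f: "flipv v (x, K, B) = (x', K', B')"
  shows "oddv t l K' B' = oddv t l K B"
  by (rule ext, rule oddv_cong[OF t], rule flipv_ident[OF p o f])

lemma flipv_in:
  assumes p: "(x, K, B) \<in> configs l \<times> (colsets t l \<alpha> \<beta> \<times> colsets t l \<alpha>' \<beta>')" and o: "oddv t l K B v"
  shows "flipv v (x, K, B) \<in> configs l \<times> (colsets t l \<alpha> \<beta> \<times> colsets t l \<alpha>' \<beta>')"
proof (cases v)
  case (Inl j0) then show ?thesis using p by (auto simp: flipv_def configs_def)
next
  case (Inr qj)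
  obtain q0 j0 where qj: "qj = (q0, j0)" by (cases qj)
  have o': "q0 < t" "0 < j0" "j0 < l" using o Inr qj by (auto simp: oddv_def dif_def)
  have lens: "length (K j0) = t" "length (B j0) = t" using p o' by (auto intro: colsets_len)
  have j0: "j0 \<in> {..l}" "insert j0 {..l} = {..l}" using o' by auto
  have "K(j0 := flp (K j0) q0) \<in> PiE (insert j0 {..l}) (\<lambda>_. configs t)"
    by (rule PiE_fun_upd) (use p lens in \<open>auto simp: configs_def colsets_def\<close>)
  moreover have "B(j0 := flp (B j0) q0) \<in> PiE (insert j0 {..l}) (\<lambda>_. configs t)"
    by (rule PiE_fun_upd) (use p lens in \<open>auto simp: configs_def colsets_def\<close>)
  ultimately have "K(j0 := flp (K j0) q0) \<in> colsets t l \<alpha> \<beta>" "B(j0 := flp (B j0) q0) \<in> colsets t l \<alpha>' \<beta>'"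
    using p o' unfolding colsets_def j0(2) by auto
  then show ?thesis using p Inr qj by (auto simp: flipv_def)
qed

lemma flipv_flipv: "flipv v (flipv v p) = p"
  by (cases p; cases v; auto simp: flipv_def split: prod.splits)

lemma sg4: "(a \<noteq> (r \<noteq> (u \<noteq> d))) \<Longrightarrow> sg a * (sg u * sg d * sg r) = -1"
  by (cases a; cases r; cases u; cases d) simp_all

lemma sg_mult: "sg a * sg b = sg (a \<noteq> b)"
  by (simp add: sg_def)

lemma sg_Cons_up: "sg (0 < Suc q \<and> (a # l) ! q \<noteq> (a # l') ! q) = sg (0 < q \<and> l ! (q - 1) \<noteq> l' ! (q - 1))"
  by (cases q) simp_all

lemma flipv_sign:
  assumes t: "0 < t" and p: "(x, K, B) \<in> configs l \<times> (colsets t l \<alpha> \<beta> \<times> colsets t l \<alpha>' \<beta>')" and o: "oddv t l K B v"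
    and f: "flipv v (x, K, B) = (x', K', B')"
  shows "Sm \<phi> h l x' K' B' = - Sm \<phi> h l x K B"
proof -
  have lx: "length x = l" using p by (auto simp: configs_def)
  have lK: "\<And>j. j \<le> l \<Longrightarrow> length (K j) = t" and lB: "\<And>j. j \<le> l \<Longrightarrow> length (B j) = t"
    using p by (auto intro: colsets_len)
  define F where "F = (\<lambda>j. Wd \<phi> (h j) (x ! j # K j) (x ! j # B j) * Bd (K j) (B j) (K (Suc j)) (B (Suc j)))"
  show ?thesis
  proof (cases v)
    case (Inl j0)
    have o': "j0 < l" "K j0 ! 0 \<noteq> B j0 ! 0" using o Inl by (auto simp: oddv_def dif_def)
    have f': "x' = flp x j0" "K' = K" "B' = B" using f Inl by (auto simp: flipv_def)
    have "Wd \<phi> (h j) (x' ! j # K j) (x' ! j # B j) * Bd (K j) (B j) (K (Suc j)) (B (Suc j))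
        = (if j = j0 then -1 else 1) * F j" if j: "j < l" for j
    proof (cases "j = j0")
      case True
      have e: "x' ! j # K j = flp (x ! j # K j) 0" "x' ! j # B j = flp (x ! j # B j) 0"
        using True f' j lx by (simp_all add: flp_def nth_list_update)
      have "Wd \<phi> (h j) (flp (x ! j # K j) 0) (flp (x ! j # B j) 0) = sg (Suc 0 < Suc t \<and> K j ! 0 \<noteq> B j ! 0) * Wd \<phi> (h j) (x ! j # K j) (x ! j # B j)"
        using Wd_flip[of "x ! j # B j" "x ! j # K j" 0 \<phi> "h j"] lK[of j] lB[of j] j by simp
      then show ?thesis unfolding e F_def using True o' t by simp
    next
      case False
      then show ?thesis using f' j lx unfolding F_def by (simp add: flp_def nth_list_update)
    qed
    then have "Sm \<phi> h l x' K' B' = (\<Prod>j<l. (if j = j0 then -1 else 1) * F j)"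
      unfolding Sm_def f'(2,3) by (intro prod.cong) auto
    also have "\<dots> = - Sm \<phi> h l x K B"
      unfolding Sm_def F_def[symmetric] using o' by (simp add: prod.distrib prod_if_one)
    finally show ?thesis .
  next
    case (Inr qj)
    obtain q0 j0 where qj: "qj = (q0, j0)" by (cases qj)
    have o': "q0 < t" "0 < j0" "j0 < l" "K j0 ! q0 = B j0 ! q0"
      and xr: "((K (j0 - 1) ! q0 \<noteq> B (j0 - 1) ! q0) \<noteq> ((K (Suc j0) ! q0 \<noteq> B (Suc j0) ! q0) \<noteq>
           ((0 < q0 \<and> K j0 ! (q0 - 1) \<noteq> B j0 ! (q0 - 1)) \<noteq> (Suc q0 < t \<and> K j0 ! Suc q0 \<noteq> B j0 ! Suc q0))))"
      using o Inr qj unfolding oddv_def dif_def by auto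
    have f': "x' = x" "K' = K(j0 := flp (K j0) q0)" "B' = B(j0 := flp (B j0) q0)" using f Inr qj by (auto simp: flipv_def)
    define sL where "sL = sg (K (j0 - 1) ! q0 \<noteq> B (j0 - 1) ! q0)"
    define sC where "sC = sg (0 < q0 \<and> K j0 ! (q0 - 1) \<noteq> B j0 ! (q0 - 1)) * sg (Suc q0 < t \<and> K j0 ! Suc q0 \<noteq> B j0 ! Suc q0)
        * sg (K (Suc j0) ! q0 \<noteq> B (Suc j0) ! q0)"
    have fac: "Wd \<phi> (h j) (x' ! j # K' j) (x' ! j # B' j) * Bd (K' j) (B' j) (K' (Suc j)) (B' (Suc j))
        = (if j = j0 - 1 then sL else 1) * ((if j = j0 then sC else 1) * F j)" if j: "j < l" for j
    proof -
      consider "j = j0 - 1" | "j = j0" | "j \<noteq> j0 - 1 \<and> j \<noteq> j0" by blast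
      then show ?thesis
      proof cases
        case 1
        have ne: "j \<noteq> j0" "Suc j = j0" using 1 o' by auto
        have "Bd (K j) (B j) (flp (K j0) q0) (flp (B j0) q0) = sL * Bd (K j) (B j) (K j0) (B j0)"
          unfolding sL_def 1 using Bd_flip_right[of "K (j0 - 1)" t "B (j0 - 1)" "K j0" "B j0" q0] lK lB o' by simp
        then show ?thesis using ne f' unfolding F_def by (simp add: mult_ac)
      next
        case 2
        have ne: "j \<noteq> j0 - 1" "Suc j \<noteq> j0" using 2 o' by auto
        have e: "x ! j # flp (K j) q0 = flp (x ! j # K j) (Suc q0)" "x ! j # flp (B j) q0 = flp (x ! j # B j) (Suc q0)"
          by (simp_all add: flp_def)
        have w: "Wd \<phi> (h j) (flp (x ! j # K j) (Suc q0)) (flp (x ! j # B j) (Suc q0))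
          = sg (0 < q0 \<and> K j ! (q0 - 1) \<noteq> B j ! (q0 - 1)) * sg (Suc q0 < t \<and> K j ! Suc q0 \<noteq> B j ! Suc q0) * Wd \<phi> (h j) (x ! j # K j) (x ! j # B j)"
        proof -
          have kne: "K j \<noteq> []" using lK[of j] j o' by auto
          show ?thesis
          using Wd_flip[of "x ! j # B j" "x ! j # K j" "Suc q0" \<phi> "h j"] lK[of j] lB[of j] j o' 2 kne
          by (cases q0) (simp_all add: flp_def)
        qed
        have b: "Bd (flp (K j) q0) (flp (B j) q0) (K (Suc j)) (B (Suc j)) = sg (K (Suc j) ! q0 \<noteq> B (Suc j) ! q0) * Bd (K j) (B j) (K (Suc j)) (B (Suc j))"
          using Bd_flip_left[of "K j" t "B j" "K (Suc j)" "B (Suc j)" q0] lK lB o' j 2 by simp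
        show ?thesis using ne f' 2 e w b unfolding F_def sC_def by (simp add: mult_ac)
      next
        case 3
        then have "Suc j \<noteq> j0" by auto
        then show ?thesis using 3 f' unfolding F_def by simp
      qed
    qed
    have "Sm \<phi> h l x' K' B' = (\<Prod>j<l. (if j = j0 - 1 then sL else 1) * ((if j = j0 then sC else 1) * F j))"
      unfolding Sm_def using fac by (intro prod.cong) auto
    also have "\<dots> = sL * (sC * Sm \<phi> h l x K B)"
      unfolding Sm_def F_def[symmetric] using o' by (simp add: prod.distrib prod_if_one)
    also have "sL * sC = -1"
      unfolding sL_def sC_def by (rule sg4[OF xr])
    then have "sL * (sC * Sm \<phi> h l x K B) = - Sm \<phi> h l x K B" by (simp add: mult.assoc[symmetric])
    finally show ?thesis .
  qed
qed

lemma invol_sum_zero: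
  fixes f :: "'a \<Rightarrow> complex"
  assumes "\<And>a. a \<in> A \<Longrightarrow> g a \<in> A" "\<And>a. a \<in> A \<Longrightarrow> g (g a) = a" "\<And>a. a \<in> A \<Longrightarrow> f (g a) = - f a"
  shows "sum f A = 0"
proof -
  have "sum (\<lambda>a. - f a) A = sum f A"
    by (rule sum.reindex_bij_witness[where i = g and j = g]) (use assms in auto)
  then show ?thesis by (simp add: sum_negf)
qed

lemma chain_one: "\<alpha> \<in> configs t \<Longrightarrow> \<beta> \<in> configs t \<Longrightarrow> chain t (\<lambda>_ _ _. 1) (Suc m) \<alpha> \<beta> = (2 ^ t) ^ m"
proof (induction m arbitrary: \<alpha>)
  case 0
  have "chain t (\<lambda>_ _ _. 1) (Suc 0) \<alpha> \<beta> = (\<Sum>c\<in>configs t. chain t (\<lambda>_ _ _. 1) 0 c \<beta>)"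
    using chain_Suc[OF 0(1), of "\<lambda>_ _ _. 1" 0 \<beta>] by simp
  also have "\<dots> = (\<Sum>c\<in>configs t. if c = \<beta> then 1 else 0)"
    by (intro sum.cong refl) (simp add: chain_0)
  also have "\<dots> = 1" using 0 by (simp add: sum.delta')
  finally show ?case by simp
next
  case (Suc m)
  have "chain t (\<lambda>_ _ _. 1) (Suc (Suc m)) \<alpha> \<beta> = (\<Sum>c\<in>configs t. chain t (\<lambda>_ _ _. 1) (Suc m) c \<beta>)"
    using chain_Suc[OF Suc(2), of "\<lambda>_ _ _. 1" "Suc m" \<beta>] by simp
  also have "\<dots> = (\<Sum>c\<in>configs t. (2 ^ t) ^ m)"
    by (intro sum.cong refl) (use Suc in auto)
  also have "\<dots> = (2 ^ t) ^ Suc m" by (simp add: card_configs)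
  finally show ?case .
qed

lemma card_colsets: "\<alpha> \<in> configs t \<Longrightarrow> \<beta> \<in> configs t \<Longrightarrow> of_nat (card (colsets t (Suc m) \<alpha> \<beta>)) = ((2::complex) ^ t) ^ m"
  using chain_one[of \<alpha> t \<beta> m] unfolding chain_def by simp

lemma Sm_diag:
  assumes "K \<in> colsets t l \<alpha> \<beta>"
  shows "Sm \<phi> h l x K K = (1 / 2) ^ (Suc t * l)"
proof -
  have "Sm \<phi> h l x K K = (\<Prod>j<l. (1 / 2) ^ Suc t)"
    unfolding Sm_def
  proof (intro prod.cong refl)
    fix j assume "j \<in> {..<l}"
    then have "length (K j) = t" "length (K (Suc j)) = t" using assms by (auto intro: colsets_len)
    then show "Wd \<phi> (h j) (x ! j # K j) (x ! j # K j) * Bd (K j) (K j) (K (Suc j)) (K (Suc j)) = (1 / 2) ^ Suc t"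
      by (simp add: Wd_abs Bd_abs)
  qed
  also have "\<dots> = ((1 / 2) ^ Suc t) ^ l" by (simp only: prod_constant card_lessThan)
  also have "\<dots> = (1 / 2) ^ (Suc t * l)" by (simp only: power_mult)
  finally show ?thesis .
qed

lemma perfect:
  assumes t: "1 \<le> t" and l: "2 * t \<le> l"
    and a: "\<alpha> \<in> configs t" "\<alpha>' \<in> configs t" "\<beta> \<in> configs t" "\<beta>' \<in> configs t"
  shows "(\<Sum>x\<in>configs l. chain t (segF \<phi> h x) l \<alpha> \<beta> * cnj (chain t (segF \<phi> h x) l \<alpha>' \<beta>'))
       = (if \<alpha> = \<alpha>' \<and> \<beta> = \<beta>' then 1 / 2 ^ t else 0)"
proof -
  define Tr where "Tr = configs l \<times> (colsets t l \<alpha> \<beta> \<times> colsets t l \<alpha>' \<beta>')"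
  define Sp where "Sp = (\<lambda>p. Sm \<phi> h l (fst p) (fst (snd p)) (snd (snd p)))"
  define bad where "bad = (\<lambda>p :: bool list \<times> (nat \<Rightarrow> bool list) \<times> (nat \<Rightarrow> bool list). \<exists>v. oddv t l (fst (snd p)) (snd (snd p)) v)"
  have t0: "0 < t" using t by simp
  have fin: "finite Tr" unfolding Tr_def by simp
  have "(\<Sum>x\<in>configs l. chain t (segF \<phi> h x) l \<alpha> \<beta> * cnj (chain t (segF \<phi> h x) l \<alpha>' \<beta>'))
      = (\<Sum>x\<in>configs l. \<Sum>K\<in>colsets t l \<alpha> \<beta>. \<Sum>B\<in>colsets t l \<alpha>' \<beta>'. Sm \<phi> h l x K B)"
    by (simp add: chain_cnj_expand)
  also have "\<dots> = (\<Sum>p\<in>Tr. Sp p)"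
    unfolding Tr_def Sp_def by (simp add: sum.cartesian_product case_prod_beta)
  also have "\<dots> = (\<Sum>p\<in>Tr. if bad p then Sp p else 0) + (\<Sum>p\<in>Tr. if bad p then 0 else Sp p)"
    by (simp add: sum.distrib[symmetric] if_distrib cong: if_cong)
  finally have split: "(\<Sum>x\<in>configs l. chain t (segF \<phi> h x) l \<alpha> \<beta> * cnj (chain t (segF \<phi> h x) l \<alpha>' \<beta>'))
     = (\<Sum>p\<in>Tr. if bad p then Sp p else 0) + (\<Sum>p\<in>Tr. if bad p then 0 else Sp p)" .
  have s1: "(\<Sum>p\<in>Tr. if bad p then Sp p else 0) = 0"
  proof -
    define g where "g = (\<lambda>p. flipv (SOME v. oddv t l (fst (snd p)) (snd (snd p)) v) p)"
    have key: "g a \<in> {p \<in> Tr. bad p} \<and> g (g a) = a \<and> Sp (g a) = - Sp a" if a: "a \<in> {p \<in> Tr. bad p}" for a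
    proof -
      obtain x K B where xKB: "a = (x, K, B)" by (cases a) auto
      have aT: "(x, K, B) \<in> configs l \<times> (colsets t l \<alpha> \<beta> \<times> colsets t l \<alpha>' \<beta>')" using a xKB Tr_def by auto
      define v where "v = (SOME v. oddv t l K B v)"
      have ov: "oddv t l K B v" using a xKB unfolding bad_def v_def by (auto intro: someI_ex)
      obtain x' K' B' where f: "flipv v (x, K, B) = (x', K', B')" by (cases "flipv v (x, K, B)") auto
      have ga: "g a = (x', K', B')" using f unfolding g_def xKB v_def by simp
      have same: "oddv t l K' B' = oddv t l K B" by (rule flipv_oddv[OF t0 aT ov f])
      have inT: "(x', K', B') \<in> Tr" using flipv_in[OF aT ov] f unfolding Tr_def by simp
      have "g (g a) = g (x', K', B')" using ga by simp
      also have "\<dots> = flipv v (x', K', B')" unfolding g_def v_def using same by simp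
      also have "\<dots> = a" using f flipv_flipv[of v "(x, K, B)"] xKB by simp
      finally have gg: "g (g a) = a" .
      have "bad (g a)" unfolding ga bad_def using same ov by auto
      moreover have "Sp (g a) = - Sp a" unfolding Sp_def using ga xKB flipv_sign[OF t0 aT ov f] by simp
      ultimately show ?thesis using inT gg ga by simp
    qed
    have "(\<Sum>p\<in>Tr. if bad p then Sp p else 0) = (\<Sum>p\<in>{p \<in> Tr. bad p}. Sp p)"
      using fin by (simp add: sum.inter_filter)
    also have "\<dots> = 0" by (rule invol_sum_zero[where g = g]) (use key in blast)+
    finally show ?thesis .
  qed
  have "(\<Sum>p\<in>Tr. if bad p then 0 else Sp p) = (\<Sum>p\<in>Tr. if fst (snd p) = snd (snd p) then Sp p else 0)"
  proof (intro sum.cong refl)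
    fix p assume p: "p \<in> Tr"
    obtain x K B where xKB: "p = (x, K, B)" by (cases p) auto
    have K: "K \<in> colsets t l \<alpha> \<beta>" and B: "B \<in> colsets t l \<alpha>' \<beta>'" using p xKB Tr_def by auto
    have eqb: "(\<not> bad p) = (K = B)"
    proof
      assume nb: "\<not> bad p"
      have allI0: "\<not> dif K B j q" if q: "q < t" and j: "j \<le> l" for q j
      proof (rule comb[where I = "\<lambda>q j. \<not> dif K B j q", OF t l _ _ q j])
        fix j assume "j < l"
        then show "\<not> dif K B j 0" using nb xKB unfolding bad_def oddv_def
          by (auto dest: spec[of _ "Inl j"])
      next
        fix q j assume qj: "q < t" "0 < j" "j < l" "\<not> dif K B j q"
        have no: "\<not> oddv t l K B (Inr (q, j))" using nb xKB unfolding bad_def by auto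
        then show "\<not> ((\<not> \<not> dif K B (j - 1) q) \<noteq> ((\<not> \<not> dif K B (Suc j) q) \<noteq>
             ((0 < q \<and> \<not> \<not> dif K B j (q - 1)) \<noteq> (Suc q < t \<and> \<not> \<not> dif K B j (Suc q)))))"
          using qj by (simp add: oddv_def)
      qed
      have allI': "K j ! q = B j ! q" if q: "q < t" and j: "j \<le> l" for q j
        using allI0[OF q j] by (simp add: dif_def)
      show "K = B"
      proof
        fix j
        show "K j = B j"
        proof (cases "j \<le> l")
          case True
          have lens: "length (K j) = t" "length (B j) = t" using colsets_len[OF K True] colsets_len[OF B True] by simp_all
          show ?thesis
          proof (rule nth_equalityI)
            show "length (K j) = length (B j)" using lens by simp
            fix i assume "i < length (K j)"
            then show "K j ! i = B j ! i" using allI'[of i j] True lens by simp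
          qed
        next
          case False
          have kp: "K \<in> PiE {..l} (\<lambda>_. configs t)" "B \<in> PiE {..l} (\<lambda>_. configs t)"
            using K B unfolding colsets_def by auto
          show ?thesis using PiE_arb[OF kp(1)] PiE_arb[OF kp(2)] False by simp
        qed
      qed
    next
      assume "K = B"
      then show "\<not> bad p" unfolding bad_def xKB oddv_def dif_def
        by (auto split: sum.splits)
    qed
    show "(if bad p then 0 else Sp p) = (if fst (snd p) = snd (snd p) then Sp p else 0)"
      using eqb xKB by (cases "K = B") simp_all
  qed
  also have "\<dots> = (\<Sum>(x, K, B)\<in>Tr. if K = B then Sm \<phi> h l x K B else 0)"
    by (intro sum.cong refl) (auto simp: Sp_def split: prod.split)
  also have "\<dots> = (\<Sum>x\<in>configs l. \<Sum>K\<in>colsets t l \<alpha> \<beta>. \<Sum>B\<in>colsets t l \<alpha>' \<beta>'. if K = B then Sm \<phi> h l x K B else 0)"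
    unfolding Tr_def by (simp only: sum.cartesian_product)
  also have "\<dots> = (\<Sum>x\<in>configs l. \<Sum>K\<in>colsets t l \<alpha> \<beta>. if K \<in> colsets t l \<alpha>' \<beta>' then Sm \<phi> h l x K K else 0)"
    by (simp add: sum.delta)
  also have "\<dots> = (if \<alpha> = \<alpha>' \<and> \<beta> = \<beta>' then 1 / 2 ^ t else 0)"
  proof (cases "\<alpha> = \<alpha>' \<and> \<beta> = \<beta>'")
    case True
    obtain m where lm: "l = Suc m" using l t by (cases l) auto
    have "(\<Sum>x\<in>configs l. \<Sum>K\<in>colsets t l \<alpha> \<beta>. if K \<in> colsets t l \<alpha>' \<beta>' then Sm \<phi> h l x K K else 0)
        = (\<Sum>x\<in>configs l. \<Sum>K\<in>colsets t l \<alpha> \<beta>. (1 / 2) ^ (Suc t * l))"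
      using True by (intro sum.cong refl) (simp add: Sm_diag)
    also have "\<dots> = of_nat (card (configs l)) * of_nat (card (colsets t l \<alpha> \<beta>)) * (1 / 2) ^ (Suc t * l)"
      by simp
    also have "\<dots> = 2 ^ Suc m * (2 ^ t) ^ m * (1 / 2) ^ (Suc t * Suc m)"
      unfolding lm card_configs using card_colsets[OF a(1) a(3), of m] by simp
    also have "\<dots> = 1 / 2 ^ t"
    proof -
      have e: "Suc t * Suc m = (Suc m + t * m) + t" by (simp add: algebra_simps)
      have "(2::complex) ^ Suc m * (2 ^ t) ^ m = 2 ^ (Suc m + t * m)" by (simp add: power_add power_mult)
      moreover have "(1 / 2 :: complex) ^ ((Suc m + t * m) + t) = (1 / 2) ^ (Suc m + t * m) * (1 / 2) ^ t"
        by (rule power_add)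
      moreover have "(2::complex) ^ (Suc m + t * m) * (1 / 2) ^ (Suc m + t * m) = 1"
        by (simp add: power_mult_distrib[symmetric])
      moreover have "(1 / 2 :: complex) ^ t = 1 / 2 ^ t" by (rule power_one_over)
      ultimately show ?thesis unfolding e by (metis (no_types, lifting) mult.assoc mult_1)
    qed
    finally show ?thesis using True by simp
  next
    case False
    have "K \<in> colsets t l \<alpha> \<beta> \<Longrightarrow> K \<notin> colsets t l \<alpha>' \<beta>'" for K using False unfolding colsets_def by auto
    then show ?thesis using False by simp
  qed
  finally have s2: "(\<Sum>p\<in>Tr. if bad p then 0 else Sp p) = (if \<alpha> = \<alpha>' \<and> \<beta> = \<beta>' then 1 / 2 ^ t else 0)" .
  show ?thesis unfolding split s1 s2 by simp
qed

lemma sum_configs_append: "(\<Sum>x\<in>configs (m + n). f x) = (\<Sum>u\<in>configs m. \<Sum>v\<in>configs n. f (u @ v))"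
proof -
  have "(\<Sum>u\<in>configs m. \<Sum>v\<in>configs n. f (u @ v)) = (\<Sum>(u, v)\<in>configs m \<times> configs n. f (u @ v))"
    by (rule sum.cartesian_product)
  also have "\<dots> = (\<Sum>x\<in>configs (m + n). f x)"
    by (rule sum.reindex_bij_witness[where j = "\<lambda>(u, v). u @ v" and i = "\<lambda>x. (take m x, drop m x)"])
      (auto simp: configs_def)
  finally show ?thesis by simp
qed

lemma mat_mul_assoc: "mat_mul n (mat_mul n A B) C x y = mat_mul n A (mat_mul n B C) x y"
  unfolding mat_mul_def by (simp add: sum_distrib_left sum_distrib_right mult.assoc) (rule sum.swap)

lemma mat_mul_cong:
  assumes "\<And>z. z \<in> configs n \<Longrightarrow> A x z = A' x z" "\<And>z. z \<in> configs n \<Longrightarrow> B z y = B' z y"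
  shows "mat_mul n A B x y = mat_mul n A' B' x y"
  unfolding mat_mul_def using assms by (intro sum.cong) auto

lemma mat_mul_id:
  assumes "x \<in> configs n" shows "mat_mul n (\<lambda>x y. if x = y then 1 else 0) B x y = B x y"
proof -
  have "mat_mul n (\<lambda>x y. if x = y then 1 else 0) B x y = (\<Sum>z\<in>configs n. if x = z then B z y else 0)"
    unfolding mat_mul_def by (intro sum.cong) auto
  also have "\<dots> = B x y" using assms by (simp add: sum.delta)
  finally show ?thesis .
qed

lemma mat_pow_cong:
  assumes "\<And>x y. x \<in> configs n \<Longrightarrow> y \<in> configs n \<Longrightarrow> M x y = M' x y"
  shows "x \<in> configs n \<Longrightarrow> y \<in> configs n \<Longrightarrow> mat_pow n M k x y = mat_pow n M' k x y"
proof (induction k arbitrary: x y)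
  case 0 then show ?case by simp
next
  case (Suc k)
  have "mat_mul n (mat_pow n M k) M x y = mat_mul n (mat_pow n M' k) M' x y"
    by (rule mat_mul_cong) (use Suc assms in auto)
  then show ?case by simp
qed

lemma mat_mul_sumform:
  fixes U W U' W' :: "'i \<Rightarrow> bool list \<Rightarrow> complex"
  shows "mat_mul n (\<lambda>x y. \<Sum>i\<in>I. U i x * W i y) (\<lambda>x y. \<Sum>j\<in>J. U' j x * W' j y) x y
   = (\<Sum>i\<in>I. \<Sum>j\<in>J. U i x * (\<Sum>z\<in>configs n. W i z * U' j z) * W' j y)"
proof -
  have "mat_mul n (\<lambda>x y. \<Sum>i\<in>I. U i x * W i y) (\<lambda>x y. \<Sum>j\<in>J. U' j x * W' j y) x y
      = (\<Sum>z\<in>configs n. \<Sum>i\<in>I. \<Sum>j\<in>J. U i x * W i z * (U' j z * W' j y))"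
    unfolding mat_mul_def by (simp add: sum_product)
  also have "\<dots> = (\<Sum>i\<in>I. \<Sum>z\<in>configs n. \<Sum>j\<in>J. U i x * W i z * (U' j z * W' j y))"
    by (rule sum.swap)
  also have "\<dots> = (\<Sum>i\<in>I. \<Sum>j\<in>J. \<Sum>z\<in>configs n. U i x * W i z * (U' j z * W' j y))"
    by (intro sum.cong refl) (rule sum.swap)
  also have "\<dots> = (\<Sum>i\<in>I. \<Sum>j\<in>J. U i x * (\<Sum>z\<in>configs n. W i z * U' j z) * W' j y)"
    by (simp add: sum_distrib_left sum_distrib_right mult_ac)
  finally show ?thesis .
qed

lemma sum_mult_cnj_swap:
  "(\<Sum>c\<in>Cs. (\<Sum>p\<in>P. f p c) * cnj (\<Sum>q\<in>Q. g q c)) = (\<Sum>p\<in>P. \<Sum>q\<in>Q. \<Sum>c\<in>Cs. f p c * cnj (g q c))"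
proof -
  have "(\<Sum>c\<in>Cs. (\<Sum>p\<in>P. f p c) * cnj (\<Sum>q\<in>Q. g q c)) = (\<Sum>c\<in>Cs. \<Sum>p\<in>P. \<Sum>q\<in>Q. f p c * cnj (g q c))"
    by (simp add: cnj_sum sum_product)
  also have "\<dots> = (\<Sum>p\<in>P. \<Sum>c\<in>Cs. \<Sum>q\<in>Q. f p c * cnj (g q c))" by (rule sum.swap)
  also have "\<dots> = (\<Sum>p\<in>P. \<Sum>q\<in>Q. \<Sum>c\<in>Cs. f p c * cnj (g q c))" by (intro sum.cong refl) (rule sum.swap)
  finally show ?thesis .
qed

lemma psi_split:
  assumes L: "1 \<le> LA + LB + LC"
    and xa: "xa \<in> configs LA" and xb: "xb \<in> configs LB" and xc: "xc \<in> configs LC"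
  shows "ringamp \<phi> h (LA + LB + LC) t (xa @ xb @ xc) =
    (\<Sum>\<gamma>\<in>configs t. \<Sum>\<delta>\<in>configs t. \<Sum>\<beta>\<in>configs t.
       chain t (segF \<phi> h xa) LA \<gamma> \<delta> * chain t (segF \<phi> (\<lambda>j. h (LA + j)) xb) LB \<delta> \<beta> *
       chain t (segF \<phi> (\<lambda>j. h (LA + LB + j)) xc) LC \<beta> \<gamma>)"
proof -
  define s where "s = xa @ xb @ xc"
  have la: "length xa = LA" "length xb = LB" "length xc = LC" using xa xb xc by (auto simp: configs_def)
  have c1: "chain t (segF \<phi> h s) LA \<gamma> \<delta> = chain t (segF \<phi> h xa) LA \<gamma> \<delta>" for \<gamma> \<delta>
    by (rule chain_cong) (simp add: segF_def s_def nth_append la)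
  have c2: "chain t (\<lambda>j. segF \<phi> h s (LA + j)) LB \<delta> \<beta> = chain t (segF \<phi> (\<lambda>j. h (LA + j)) xb) LB \<delta> \<beta>" for \<delta> \<beta>
    by (rule chain_cong) (simp add: segF_def s_def nth_append la)
  have c3: "chain t (\<lambda>j. segF \<phi> h s (LA + (LB + j))) LC \<beta> \<gamma> = chain t (segF \<phi> (\<lambda>j. h (LA + LB + j)) xc) LC \<beta> \<gamma>" for \<beta> \<gamma>
    by (rule chain_cong) (simp add: segF_def s_def nth_append la add.assoc)
  have "ringamp \<phi> h (LA + LB + LC) t s = (\<Sum>\<gamma>\<in>configs t. chain t (segF \<phi> h s) (LA + (LB + LC)) \<gamma> \<gamma>)"
    using ring_chain[OF L, of \<phi> h t s] unfolding segF_def by (simp add: add.assoc)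
  also have "\<dots> = (\<Sum>\<gamma>\<in>configs t. \<Sum>\<delta>\<in>configs t. chain t (segF \<phi> h s) LA \<gamma> \<delta> *
        (\<Sum>\<beta>\<in>configs t. chain t (\<lambda>j. segF \<phi> h s (LA + j)) LB \<delta> \<beta> * chain t (\<lambda>j. segF \<phi> h s (LA + (LB + j))) LC \<beta> \<gamma>))"
  proof (intro sum.cong refl)
    fix \<gamma> assume g: "\<gamma> \<in> configs t"
    show "chain t (segF \<phi> h s) (LA + (LB + LC)) \<gamma> \<gamma> = (\<Sum>\<delta>\<in>configs t. chain t (segF \<phi> h s) LA \<gamma> \<delta> *
        (\<Sum>\<beta>\<in>configs t. chain t (\<lambda>j. segF \<phi> h s (LA + j)) LB \<delta> \<beta> * chain t (\<lambda>j. segF \<phi> h s (LA + (LB + j))) LC \<beta> \<gamma>))"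
      unfolding chain_add[OF g]
    proof (intro sum.cong refl)
      fix \<delta> assume d: "\<delta> \<in> configs t"
      show "chain t (segF \<phi> h s) LA \<gamma> \<delta> * chain t (\<lambda>j. segF \<phi> h s (LA + j)) (LB + LC) \<delta> \<gamma> =
         chain t (segF \<phi> h s) LA \<gamma> \<delta> * (\<Sum>\<beta>\<in>configs t. chain t (\<lambda>j. segF \<phi> h s (LA + j)) LB \<delta> \<beta> * chain t (\<lambda>j. segF \<phi> h s (LA + (LB + j))) LC \<beta> \<gamma>)"
        unfolding chain_add[OF d] by simp
    qed
  qed
  also have "\<dots> = (\<Sum>\<gamma>\<in>configs t. \<Sum>\<delta>\<in>configs t. \<Sum>\<beta>\<in>configs t.
       chain t (segF \<phi> h xa) LA \<gamma> \<delta> * chain t (segF \<phi> (\<lambda>j. h (LA + j)) xb) LB \<delta> \<beta> *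
       chain t (segF \<phi> (\<lambda>j. h (LA + LB + j)) xc) LC \<beta> \<gamma>)"
    unfolding c1 c2 c3 by (simp add: sum_distrib_left mult.assoc)
  finally show ?thesis unfolding s_def .
qed

context
  fixes LA LB LC t :: nat and h :: "nat \<Rightarrow> real" and \<phi> :: real
  assumes t1: "1 \<le> t" and lA: "2 * t \<le> LA" and lB: "2 * t \<le> LB" and lC: "2 * t \<le> LC"
begin

definition "DD = (2::complex) ^ t"
definition "Aseg x \<gamma> \<delta> = chain t (segF \<phi> h x) LA \<gamma> \<delta>"
definition "Bseg x \<delta> \<beta> = chain t (segF \<phi> (\<lambda>j. h (LA + j)) x) LB \<delta> \<beta>"
definition "Cseg x \<beta> \<gamma> = chain t (segF \<phi> (\<lambda>j. h (LA + LB + j)) x) LC \<beta> \<gamma>"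
definition "Ix = configs t \<times> configs t \<times> configs t \<times> configs t"
definition "uu \<iota> x = (case \<iota> of (\<gamma>, \<delta>, \<delta>', \<beta>) \<Rightarrow> Aseg (take LA x) \<gamma> \<delta> * cnj (Bseg (drop LA x) \<delta>' \<beta>))"
definition "ww \<iota> y = (case \<iota> of (\<gamma>, \<delta>, \<delta>', \<beta>) \<Rightarrow> Bseg (drop LA y) \<delta> \<beta> * cnj (Aseg (take LA y) \<gamma> \<delta>'))"
definition "sw \<iota> = (case \<iota> of (\<gamma>, \<delta>, \<delta>', (\<beta> :: bool list)) \<Rightarrow> (\<gamma>, \<delta>', \<delta>, \<beta>))"
definition "Rf x y = (\<Sum>\<iota>\<in>Ix. (uu \<iota> x / DD) * ww \<iota> y)"
definition "Pf x y = (\<Sum>\<iota>\<in>Ix. uu \<iota> x * ww (sw \<iota>) y)"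

lemma DD_nz: "DD \<noteq> 0" unfolding DD_def by simp

lemma orthA: "\<gamma> \<in> configs t \<Longrightarrow> \<gamma>' \<in> configs t \<Longrightarrow> \<delta> \<in> configs t \<Longrightarrow> \<delta>' \<in> configs t \<Longrightarrow>
    (\<Sum>x\<in>configs LA. Aseg x \<gamma> \<delta> * cnj (Aseg x \<gamma>' \<delta>')) = (if \<gamma> = \<gamma>' \<and> \<delta> = \<delta>' then 1 / DD else 0)"
  unfolding Aseg_def DD_def by (rule perfect[OF t1 lA])

lemma orthB: "\<gamma> \<in> configs t \<Longrightarrow> \<gamma>' \<in> configs t \<Longrightarrow> \<delta> \<in> configs t \<Longrightarrow> \<delta>' \<in> configs t \<Longrightarrow>
    (\<Sum>x\<in>configs LB. Bseg x \<gamma> \<delta> * cnj (Bseg x \<gamma>' \<delta>')) = (if \<gamma> = \<gamma>' \<and> \<delta> = \<delta>' then 1 / DD else 0)"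
  unfolding Bseg_def DD_def by (rule perfect[OF t1 lB])

lemma orthC: "\<gamma> \<in> configs t \<Longrightarrow> \<gamma>' \<in> configs t \<Longrightarrow> \<delta> \<in> configs t \<Longrightarrow> \<delta>' \<in> configs t \<Longrightarrow>
    (\<Sum>x\<in>configs LC. Cseg x \<gamma> \<delta> * cnj (Cseg x \<gamma>' \<delta>')) = (if \<gamma> = \<gamma>' \<and> \<delta> = \<delta>' then 1 / DD else 0)"
  unfolding Cseg_def DD_def by (rule perfect[OF t1 lC])

lemma inner:
  assumes i: "\<iota> \<in> Ix" and k: "\<kappa> \<in> Ix"
  shows "(\<Sum>y\<in>configs (LA + LB). ww \<iota> y * uu \<kappa> y) = (if \<kappa> = sw \<iota> then 1 / DD ^ 2 else 0)"
proof -
  obtain \<gamma> \<delta> \<delta>' \<beta> where iv: "\<iota> = (\<gamma>, \<delta>, \<delta>', \<beta>)" by (cases \<iota>) auto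
  obtain \<gamma>2 \<delta>2 \<delta>2' \<beta>2 where kv: "\<kappa> = (\<gamma>2, \<delta>2, \<delta>2', \<beta>2)" by (cases \<kappa>) auto
  have mem: "\<gamma> \<in> configs t" "\<delta> \<in> configs t" "\<delta>' \<in> configs t" "\<beta> \<in> configs t"
    "\<gamma>2 \<in> configs t" "\<delta>2 \<in> configs t" "\<delta>2' \<in> configs t" "\<beta>2 \<in> configs t"
    using i k iv kv unfolding Ix_def by auto
  have "(\<Sum>y\<in>configs (LA + LB). ww \<iota> y * uu \<kappa> y)
      = (\<Sum>u\<in>configs LA. \<Sum>v\<in>configs LB. ww \<iota> (u @ v) * uu \<kappa> (u @ v))"
    by (rule sum_configs_append)
  also have "\<dots> = (\<Sum>u\<in>configs LA. \<Sum>v\<in>configs LB.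
        (Aseg u \<gamma>2 \<delta>2 * cnj (Aseg u \<gamma> \<delta>')) * (Bseg v \<delta> \<beta> * cnj (Bseg v \<delta>2' \<beta>2)))"
  proof (intro sum.cong refl)
    fix u v assume "u \<in> configs LA" "v \<in> configs LB"
    then have "length u = LA" by (simp add: configs_def)
    then show "ww \<iota> (u @ v) * uu \<kappa> (u @ v) = (Aseg u \<gamma>2 \<delta>2 * cnj (Aseg u \<gamma> \<delta>')) * (Bseg v \<delta> \<beta> * cnj (Bseg v \<delta>2' \<beta>2))"
      unfolding iv kv ww_def uu_def by (simp add: mult_ac)
  qed
  also have "\<dots> = (\<Sum>u\<in>configs LA. Aseg u \<gamma>2 \<delta>2 * cnj (Aseg u \<gamma> \<delta>')) * (\<Sum>v\<in>configs LB. Bseg v \<delta> \<beta> * cnj (Bseg v \<delta>2' \<beta>2))"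
    by (simp add: sum_product)
  also have "\<dots> = (if \<gamma>2 = \<gamma> \<and> \<delta>2 = \<delta>' then 1 / DD else 0) * (if \<delta> = \<delta>2' \<and> \<beta> = \<beta>2 then 1 / DD else 0)"
    using mem by (simp add: orthA orthB)
  also have "\<dots> = (if \<kappa> = sw \<iota> then 1 / DD ^ 2 else 0)"
    unfolding iv kv sw_def by (auto simp: power2_eq_square)
  finally show ?thesis .
qed

lemma sw_Ix: "\<iota> \<in> Ix \<Longrightarrow> sw \<iota> \<in> Ix"
  unfolding Ix_def sw_def by (auto split: prod.splits)

lemma sw_sw: "sw (sw \<iota>) = \<iota>"
  unfolding sw_def by (auto split: prod.splits)

lemma finite_Ix: "finite Ix" unfolding Ix_def by simp

lemma card_Ix: "card Ix = (2 ^ t) ^ 4"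
  unfolding Ix_def by (simp add: card_cartesian_product card_configs power4_eq_xxxx)

lemma Rf_fun: "Rf = (\<lambda>x y. \<Sum>\<iota>\<in>Ix. (uu \<iota> x / DD) * ww \<iota> y)"
  unfolding Rf_def by (intro ext) simp

lemma Pf_fun: "Pf = (\<lambda>x y. \<Sum>\<iota>\<in>Ix. uu \<iota> x * ww (sw \<iota>) y)"
  unfolding Pf_def by (intro ext) simp

lemma RR: "mat_mul (LA + LB) Rf Rf x y = Pf x y / DD ^ 4"
proof -
  have "mat_mul (LA + LB) Rf Rf x y
      = (\<Sum>i\<in>Ix. \<Sum>j\<in>Ix. (uu i x / DD) * (\<Sum>z\<in>configs (LA + LB). ww i z * (uu j z / DD)) * ww j y)"
    unfolding Rf_fun by (rule mat_mul_sumform)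
  also have "\<dots> = (\<Sum>i\<in>Ix. \<Sum>j\<in>Ix. if j = sw i then (uu i x / DD) * (1 / DD ^ 3) * ww j y else 0)"
  proof (intro sum.cong refl)
    fix i j assume ij: "i \<in> Ix" "j \<in> Ix"
    have "(\<Sum>z\<in>configs (LA + LB). ww i z * (uu j z / DD)) = (\<Sum>z\<in>configs (LA + LB). ww i z * uu j z) / DD"
      by (simp add: sum_divide_distrib)
    also have "\<dots> = (if j = sw i then 1 / DD ^ 3 else 0)"
      using inner[OF ij] by (simp add: power3_eq_cube power2_eq_square)
    finally show "(uu i x / DD) * (\<Sum>z\<in>configs (LA + LB). ww i z * (uu j z / DD)) * ww j y
        = (if j = sw i then (uu i x / DD) * (1 / DD ^ 3) * ww j y else 0)" by simp
  qed
  also have "\<dots> = (\<Sum>i\<in>Ix. (uu i x / DD) * (1 / DD ^ 3) * ww (sw i) y)"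
    using sw_Ix finite_Ix by (intro sum.cong refl) (simp add: sum.delta)
  also have "\<dots> = Pf x y / DD ^ 4"
    unfolding Pf_def by (simp add: sum_divide_distrib power4_eq_xxxx power3_eq_cube mult_ac)
  finally show ?thesis .
qed

lemma PP: "mat_mul (LA + LB) Pf Pf x y = Pf x y / DD ^ 2"
proof -
  have "mat_mul (LA + LB) Pf Pf x y
      = (\<Sum>i\<in>Ix. \<Sum>j\<in>Ix. uu i x * (\<Sum>z\<in>configs (LA + LB). ww (sw i) z * uu j z) * ww (sw j) y)"
    unfolding Pf_fun by (rule mat_mul_sumform)
  also have "\<dots> = (\<Sum>i\<in>Ix. \<Sum>j\<in>Ix. if j = i then uu i x * (1 / DD ^ 2) * ww (sw j) y else 0)"
  proof (intro sum.cong refl)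
    fix i j assume ij: "i \<in> Ix" "j \<in> Ix"
    have "(\<Sum>z\<in>configs (LA + LB). ww (sw i) z * uu j z) = (if j = i then 1 / DD ^ 2 else 0)"
      using inner[OF sw_Ix[OF ij(1)] ij(2)] by (simp add: sw_sw)
    then show "uu i x * (\<Sum>z\<in>configs (LA + LB). ww (sw i) z * uu j z) * ww (sw j) y
        = (if j = i then uu i x * (1 / DD ^ 2) * ww (sw j) y else 0)" by simp
  qed
  also have "\<dots> = (\<Sum>i\<in>Ix. uu i x * (1 / DD ^ 2) * ww (sw i) y)"
    using finite_Ix by (intro sum.cong refl) (simp add: sum.delta)
  also have "\<dots> = Pf x y / DD ^ 2"
    unfolding Pf_def by (simp add: sum_divide_distrib mult_ac)
  finally show ?thesis .
qed

lemma trP: "mtrace (LA + LB) Pf = DD ^ 2"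
proof -
  have "mtrace (LA + LB) Pf = (\<Sum>i\<in>Ix. \<Sum>x\<in>configs (LA + LB). ww (sw i) x * uu i x)"
    unfolding mtrace_def Pf_def by (subst sum.swap) (simp add: mult_ac)
  also have "\<dots> = (\<Sum>i\<in>Ix. 1 / DD ^ 2)"
    using inner sw_Ix by (intro sum.cong refl) (simp add: sw_sw)
  also have "\<dots> = of_nat (card Ix) / DD ^ 2" by simp
  also have "\<dots> = DD ^ 2"
    unfolding card_Ix DD_def by (simp add: power2_eq_square power4_eq_xxxx)
  finally show ?thesis .
qed

lemma mat_mul_scale:
  "mat_mul n (\<lambda>x z. M x z / a) (\<lambda>z y. N z y / b) x y = mat_mul n M N x y / (a * b)"
  unfolding mat_mul_def by (simp add: sum_divide_distrib)

lemma powR: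
  assumes "x \<in> configs (LA + LB)" "y \<in> configs (LA + LB)"
  shows "mat_pow (LA + LB) Rf (2 * Suc k) x y = Pf x y / DD ^ 4 / (DD ^ 6) ^ k"
  using assms
proof (induction k arbitrary: x y)
  case 0
  have "mat_pow (LA + LB) Rf (2 * Suc 0) x y = mat_mul (LA + LB) (mat_mul (LA + LB) (\<lambda>x y. if x = y then 1 else 0) Rf) Rf x y"
    by (simp add: numeral_2_eq_2)
  also have "\<dots> = mat_mul (LA + LB) Rf Rf x y"
    by (rule mat_mul_cong) (simp_all add: mat_mul_id 0)
  finally show ?case by (simp add: RR)
next
  case (Suc k)
  have "mat_pow (LA + LB) Rf (2 * Suc (Suc k)) x y = mat_mul (LA + LB) (mat_mul (LA + LB) (mat_pow (LA + LB) Rf (2 * Suc k)) Rf) Rf x y"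
    by simp
  also have "\<dots> = mat_mul (LA + LB) (mat_pow (LA + LB) Rf (2 * Suc k)) (mat_mul (LA + LB) Rf Rf) x y"
    by (rule mat_mul_assoc)
  also have "\<dots> = mat_mul (LA + LB) (\<lambda>x z. Pf x z / (DD ^ 4 * (DD ^ 6) ^ k)) (\<lambda>z y. Pf z y / DD ^ 4) x y"
  proof -
    have ih: "\<And>z. z \<in> configs (LA + LB) \<Longrightarrow> mat_pow (LA + LB) Rf (2 * Suc k) x z = Pf x z / (DD ^ 4 * (DD ^ 6) ^ k)"
      using Suc.IH[OF Suc.prems(1)] by (simp only: divide_divide_eq_left)
    show ?thesis by (rule mat_mul_cong) (erule ih, simp add: RR)
  qed
  also have "\<dots> = mat_mul (LA + LB) Pf Pf x y / (DD ^ 4 * (DD ^ 6) ^ k * DD ^ 4)"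
    by (rule mat_mul_scale)
  also have "\<dots> = Pf x y / DD ^ 4 / (DD ^ 6) ^ Suc k"
    using DD_nz by (simp add: PP field_simps power_add[symmetric] power_mult[symmetric])
  finally show ?case .
qed

lemma psi_eq:
  assumes "xa \<in> configs LA" "xb \<in> configs LB" "xc \<in> configs LC"
  shows "(floquet (LA + LB + LC) (pi / 4) (- pi / 4) h ^^ t) (prod_state (LA + LB + LC) (\<lambda>_. pi / 2) (\<lambda>_. \<phi>)) (xa @ xb @ xc)
    = (\<Sum>(\<gamma>, \<delta>, \<beta>)\<in>configs t \<times> configs t \<times> configs t. Aseg xa \<gamma> \<delta> * Bseg xb \<delta> \<beta> * Cseg xc \<beta> \<gamma>)"
proof -
  have L: "1 \<le> LA + LB + LC" using lA t1 by simp
  have "xa @ xb @ xc \<in> configs (LA + LB + LC)" using assms by (simp add: configs_def)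
  then have "(floquet (LA + LB + LC) (pi / 4) (- pi / 4) h ^^ t) (prod_state (LA + LB + LC) (\<lambda>_. pi / 2) (\<lambda>_. \<phi>)) (xa @ xb @ xc)
      = (\<Sum>\<gamma>\<in>configs t. \<Sum>\<delta>\<in>configs t. \<Sum>\<beta>\<in>configs t. Aseg xa \<gamma> \<delta> * Bseg xb \<delta> \<beta> * Cseg xc \<beta> \<gamma>)"
    using psi_ring[OF _ L] psi_split[OF L assms] unfolding Aseg_def Bseg_def Cseg_def by simp
  also have "\<dots> = (\<Sum>(\<gamma>, \<delta>, \<beta>)\<in>configs t \<times> configs t \<times> configs t. Aseg xa \<gamma> \<delta> * Bseg xb \<delta> \<beta> * Cseg xc \<beta> \<gamma>)"
    by (simp only: sum.cartesian_product)
  finally show ?thesis .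
qed

lemma triple_delta:
  assumes "\<gamma> \<in> configs t" "\<beta> \<in> configs t"
  shows "(\<Sum>(\<gamma>', \<delta>', \<beta>')\<in>configs t \<times> configs t \<times> configs t. if \<beta> = \<beta>' \<and> \<gamma> = \<gamma>' then F \<gamma>' \<delta>' \<beta>' else 0)
     = (\<Sum>\<delta>'\<in>configs t. F \<gamma> \<delta>' \<beta>)"
proof -
  have "(\<Sum>(\<gamma>', \<delta>', \<beta>')\<in>configs t \<times> configs t \<times> configs t. if \<beta> = \<beta>' \<and> \<gamma> = \<gamma>' then F \<gamma>' \<delta>' \<beta>' else 0)
      = (\<Sum>\<gamma>'\<in>configs t. \<Sum>\<delta>'\<in>configs t. \<Sum>\<beta>'\<in>configs t. if \<beta> = \<beta>' \<and> \<gamma> = \<gamma>' then F \<gamma>' \<delta>' \<beta>' else 0)"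
    by (simp only: sum.cartesian_product)
  also have "\<dots> = (\<Sum>\<gamma>'\<in>configs t. if \<gamma> = \<gamma>' then (\<Sum>\<delta>'\<in>configs t. F \<gamma>' \<delta>' \<beta>) else 0)"
    using assms by (intro sum.cong refl) (auto simp: sum.delta if_distrib cong: if_cong)
  also have "\<dots> = (\<Sum>\<delta>'\<in>configs t. F \<gamma> \<delta>' \<beta>)" using assms by (simp add: sum.delta)
  finally show ?thesis .
qed

lemma R_eq:
  assumes x: "x \<in> configs (LA + LB)" and y: "y \<in> configs (LA + LB)"
  shows "ptranspose_after LA (rhoAB LA LB LC (pi / 4) (- pi / 4) h \<phi> t) x y = Rf x y"
proof -
  define psi where "psi = (floquet (LA + LB + LC) (pi / 4) (- pi / 4) h ^^ t) (prod_state (LA + LB + LC) (\<lambda>_. pi / 2) (\<lambda>_. \<phi>))"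
  define xA where "xA = take LA x"
  define xB where "xB = drop LA x"
  define yA where "yA = take LA y"
  define yB where "yB = drop LA y"
  define T3 where "T3 = configs t \<times> configs t \<times> configs t"
  have lens: "xA \<in> configs LA" "xB \<in> configs LB" "yA \<in> configs LA" "yB \<in> configs LB"
    using x y unfolding xA_def xB_def yA_def yB_def configs_def by auto
  define X where "X = (\<lambda>(p :: bool list \<times> bool list \<times> bool list) c. case p of (\<gamma>, \<delta>, \<beta>) \<Rightarrow> Aseg xA \<gamma> \<delta> * Bseg yB \<delta> \<beta> * Cseg c \<beta> \<gamma>)"
  define Y where "Y = (\<lambda>(p :: bool list \<times> bool list \<times> bool list) c. case p of (\<gamma>, \<delta>, \<beta>) \<Rightarrow> Aseg yA \<gamma> \<delta> * Bseg xB \<delta> \<beta> * Cseg c \<beta> \<gamma>)"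
  have "ptranspose_after LA (rhoAB LA LB LC (pi / 4) (- pi / 4) h \<phi> t) x y
      = (\<Sum>c\<in>configs LC. psi (xA @ yB @ c) * cnj (psi (yA @ xB @ c)))"
    unfolding ptranspose_after_def rhoAB_def ptrace_last_def proj_def psi_def xA_def xB_def yA_def yB_def by simp
  also have "\<dots> = (\<Sum>c\<in>configs LC. (\<Sum>p\<in>T3. X p c) * cnj (\<Sum>q\<in>T3. Y q c))"
  proof (intro sum.cong refl)
    fix c assume c: "c \<in> configs LC"
    show "psi (xA @ yB @ c) * cnj (psi (yA @ xB @ c)) = (\<Sum>p\<in>T3. X p c) * cnj (\<Sum>q\<in>T3. Y q c)"
      unfolding psi_def psi_eq[OF lens(1) lens(4) c] psi_eq[OF lens(3) lens(2) c] X_def Y_def T3_def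
      by (simp add: case_prod_beta)
  qed
  also have "\<dots> = (\<Sum>p\<in>T3. \<Sum>q\<in>T3. \<Sum>c\<in>configs LC. X p c * cnj (Y q c))"
    by (rule sum_mult_cnj_swap)
  also have "\<dots> = (\<Sum>p\<in>T3. case p of (\<gamma>, \<delta>, \<beta>) \<Rightarrow> \<Sum>\<delta>'\<in>configs t.
        Aseg xA \<gamma> \<delta> * Bseg yB \<delta> \<beta> * cnj (Aseg yA \<gamma> \<delta>' * Bseg xB \<delta>' \<beta>) / DD)"
  proof (intro sum.cong refl)
    fix p assume p: "p \<in> T3"
    obtain \<gamma> \<delta> \<beta> where pv: "p = (\<gamma>, \<delta>, \<beta>)" by (cases p) auto
    have mem: "\<gamma> \<in> configs t" "\<delta> \<in> configs t" "\<beta> \<in> configs t" using p pv T3_def by auto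
    have "(\<Sum>q\<in>T3. \<Sum>c\<in>configs LC. X p c * cnj (Y q c))
        = (\<Sum>(\<gamma>', \<delta>', \<beta>')\<in>T3. if \<beta> = \<beta>' \<and> \<gamma> = \<gamma>' then Aseg xA \<gamma> \<delta> * Bseg yB \<delta> \<beta> * cnj (Aseg yA \<gamma>' \<delta>' * Bseg xB \<delta>' \<beta>') / DD else 0)"
    proof (intro sum.cong refl)
      fix q assume q: "q \<in> T3"
      obtain \<gamma>' \<delta>' \<beta>' where qv: "q = (\<gamma>', \<delta>', \<beta>')" by (cases q) auto
      have mem': "\<gamma>' \<in> configs t" "\<delta>' \<in> configs t" "\<beta>' \<in> configs t" using q qv T3_def by auto
      have "(\<Sum>c\<in>configs LC. X p c * cnj (Y q c))
          = Aseg xA \<gamma> \<delta> * Bseg yB \<delta> \<beta> * cnj (Aseg yA \<gamma>' \<delta>' * Bseg xB \<delta>' \<beta>') * (\<Sum>c\<in>configs LC. Cseg c \<beta> \<gamma> * cnj (Cseg c \<beta>' \<gamma>'))"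
        unfolding X_def Y_def pv qv by (simp add: sum_distrib_left mult_ac)
      also have "\<dots> = (if \<beta> = \<beta>' \<and> \<gamma> = \<gamma>' then Aseg xA \<gamma> \<delta> * Bseg yB \<delta> \<beta> * cnj (Aseg yA \<gamma>' \<delta>' * Bseg xB \<delta>' \<beta>') / DD else 0)"
        using mem mem' by (simp add: orthC)
      finally show "(\<Sum>c\<in>configs LC. X p c * cnj (Y q c)) = (case q of (\<gamma>', \<delta>', \<beta>') \<Rightarrow>
          if \<beta> = \<beta>' \<and> \<gamma> = \<gamma>' then Aseg xA \<gamma> \<delta> * Bseg yB \<delta> \<beta> * cnj (Aseg yA \<gamma>' \<delta>' * Bseg xB \<delta>' \<beta>') / DD else 0)"
        unfolding qv by simp
    qed
    also have "\<dots> = (\<Sum>\<delta>'\<in>configs t. Aseg xA \<gamma> \<delta> * Bseg yB \<delta> \<beta> * cnj (Aseg yA \<gamma> \<delta>' * Bseg xB \<delta>' \<beta>) / DD)"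
      unfolding T3_def by (rule triple_delta[OF mem(1) mem(3)])
    finally show "(\<Sum>q\<in>T3. \<Sum>c\<in>configs LC. X p c * cnj (Y q c)) = (case p of (\<gamma>, \<delta>, \<beta>) \<Rightarrow> \<Sum>\<delta>'\<in>configs t.
        Aseg xA \<gamma> \<delta> * Bseg yB \<delta> \<beta> * cnj (Aseg yA \<gamma> \<delta>' * Bseg xB \<delta>' \<beta>) / DD)"
      unfolding pv by simp
  qed
  also have "\<dots> = (\<Sum>\<gamma>\<in>configs t. \<Sum>\<delta>\<in>configs t. \<Sum>\<beta>\<in>configs t. \<Sum>\<delta>'\<in>configs t.
        Aseg xA \<gamma> \<delta> * Bseg yB \<delta> \<beta> * cnj (Aseg yA \<gamma> \<delta>' * Bseg xB \<delta>' \<beta>) / DD)"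
  proof -
    define G where "G \<gamma> \<delta> \<beta> = (\<Sum>\<delta>'\<in>configs t. Aseg xA \<gamma> \<delta> * Bseg yB \<delta> \<beta> * cnj (Aseg yA \<gamma> \<delta>' * Bseg xB \<delta>' \<beta>) / DD)" for \<gamma> \<delta> \<beta>
    have "(\<Sum>p\<in>T3. case p of (\<gamma>, \<delta>, \<beta>) \<Rightarrow> G \<gamma> \<delta> \<beta>) = (\<Sum>\<gamma>\<in>configs t. \<Sum>\<delta>\<in>configs t. \<Sum>\<beta>\<in>configs t. G \<gamma> \<delta> \<beta>)"
      unfolding T3_def by (simp only: sum.cartesian_product)
    then show ?thesis unfolding G_def .
  qed
  also have "\<dots> = (\<Sum>\<gamma>\<in>configs t. \<Sum>\<delta>\<in>configs t. \<Sum>\<delta>'\<in>configs t. \<Sum>\<beta>\<in>configs t.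
        Aseg xA \<gamma> \<delta> * Bseg yB \<delta> \<beta> * cnj (Aseg yA \<gamma> \<delta>' * Bseg xB \<delta>' \<beta>) / DD)"
    by (rule sum.cong[OF refl], rule sum.cong[OF refl], rule sum.swap)
  also have "\<dots> = (\<Sum>(\<gamma>, \<delta>, \<delta>', \<beta>)\<in>Ix. Aseg xA \<gamma> \<delta> * Bseg yB \<delta> \<beta> * cnj (Aseg yA \<gamma> \<delta>' * Bseg xB \<delta>' \<beta>) / DD)"
    unfolding Ix_def by (simp only: sum.cartesian_product)
  also have "\<dots> = Rf x y"
    unfolding Rf_def uu_def ww_def xA_def xB_def yA_def yB_def
    by (intro sum.cong refl) (auto simp: mult_ac)
  finally show ?thesis .
qed

lemma final_trace:
  assumes n: "1 \<le> n"
  shows "mtrace (LA + LB) (mat_pow (LA + LB) (ptranspose_after LA (rhoAB LA LB LC (pi / 4) (- pi / 4) h \<phi> t)) (2 * n))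
       = 1 / DD ^ (6 * n - 4)"
proof -
  obtain k where k: "n = Suc k" using n by (cases n) auto
  have "mtrace (LA + LB) (mat_pow (LA + LB) (ptranspose_after LA (rhoAB LA LB LC (pi / 4) (- pi / 4) h \<phi> t)) (2 * n))
      = (\<Sum>x\<in>configs (LA + LB). mat_pow (LA + LB) Rf (2 * Suc k) x x)"
    unfolding mtrace_def k
  proof (intro sum.cong refl)
    fix x assume x: "x \<in> configs (LA + LB)"
    show "mat_pow (LA + LB) (ptranspose_after LA (rhoAB LA LB LC (pi / 4) (- pi / 4) h \<phi> t)) (2 * Suc k) x x
        = mat_pow (LA + LB) Rf (2 * Suc k) x x"
      by (rule mat_pow_cong[OF R_eq x x])
  qed
  also have "\<dots> = (\<Sum>x\<in>configs (LA + LB). Pf x x / DD ^ 4 / (DD ^ 6) ^ k)"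
  proof (intro sum.cong refl)
    fix x assume x: "x \<in> configs (LA + LB)"
    show "mat_pow (LA + LB) Rf (2 * Suc k) x x = Pf x x / DD ^ 4 / (DD ^ 6) ^ k" by (rule powR[OF x x])
  qed
  also have "\<dots> = mtrace (LA + LB) Pf / DD ^ 4 / (DD ^ 6) ^ k"
    unfolding mtrace_def by (simp add: sum_divide_distrib)
  also have "\<dots> = 1 / DD ^ (6 * n - 4)"
  proof -
    have e: "6 * n - 4 = 2 + 6 * k" using k by simp
    have a: "(DD ^ 6) ^ k = DD ^ (6 * k)" by (simp add: power_mult)
    have b: "DD ^ (2 + 6 * k) = DD ^ 2 * DD ^ (6 * k)" by (rule power_add)
    have c: "DD ^ 4 = DD ^ 2 * DD ^ 2" by (simp add: power4_eq_xxxx power2_eq_square)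
    have d: "DD ^ 2 \<noteq> 0" "DD ^ (6 * k) \<noteq> 0" using DD_nz by simp_all
    have f: "DD ^ 2 / DD ^ 4 = 1 / DD ^ 2" unfolding c using d(1) by (rule nonzero_divide_mult_cancel_left)
    show ?thesis unfolding trP e a b f by (simp add: divide_divide_eq_left)
  qed
  finally show ?thesis .
qed

lemma final_trace2:
  assumes n: "1 \<le> n"
  shows "mtrace (LA + LB) (mat_pow (LA + LB) (ptranspose_after LA (rhoAB LA LB LC (pi / 4) (- pi / 4) h \<phi> t)) (2 * n))
       = complex_of_real (1 / 2 ^ (t * (6 * n - 4)))"
  unfolding final_trace[OF n] DD_def by (simp add: power_mult)

end

theorem lemma1:
  fixes LA LB LC t n :: nat and h :: "nat \<Rightarrow> real" and \<phi> :: real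
  assumes "t \<ge> 1" and "2 * t \<le> min LA (min LB LC)" and "n \<ge> 1"
    and "0 \<le> \<phi>" and "\<phi> \<le> 2 * pi"
  shows "Ln (mtrace (LA + LB)
            (mat_pow (LA + LB) (ptranspose_after LA (rhoAB LA LB LC (pi / 4) (- pi / 4) h \<phi> t)) (2 * n)))
         = complex_of_real ((4 - 6 * real n) * real t * ln 2)"
proof -
  have l: "2 * t \<le> LA" "2 * t \<le> LB" "2 * t \<le> LC" using assms(2) by auto
  have tr: "mtrace (LA + LB) (mat_pow (LA + LB) (ptranspose_after LA (rhoAB LA LB LC (pi / 4) (- pi / 4) h \<phi> t)) (2 * n))
      = complex_of_real (1 / 2 ^ (t * (6 * n - 4)))"
    by (rule final_trace2[OF assms(1) l assms(3)])
  have "ln (1 / 2 ^ (t * (6 * n - 4)) :: real) = - (real (t * (6 * n - 4)) * ln 2)"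
    by (simp add: ln_div ln_realpow)
  also have "\<dots> = (4 - 6 * real n) * real t * ln 2"
    using assms(3) by (simp add: of_nat_diff algebra_simps)
  finally have ln: "ln (1 / 2 ^ (t * (6 * n - 4)) :: real) = (4 - 6 * real n) * real t * ln 2" .
  show ?thesis unfolding tr ln[symmetric] by (rule Ln_of_real) simp
qed

end
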